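(* Let $N$ be a positive integer and $n\in\mathbb{N}$. In each of the following four cases the set $\mathrm{TFF}(\alpha,N)$ has exactly one maximal element with respect to the majorization order $\preccurlyeq$, namely the sequence $\mathbf L$ given: (1) $\alpha=n$: $\mathbf L=(N,N,\ldots,N)$ ($n$ entries); (2) $\alpha=1+\frac1n$ and $n\mid N$: $\mathbf L=(\frac Nn,\ldots,\frac Nn)$ ($n+1$ entries); (3) $\alpha=n+\frac12$ and $2\mid N$: $\mathbf L=(N,\ldots,N,\frac N2,\frac N2,\frac N2)$ with $n-1$ entries equal to $N$; (4) $\alpha=1+\frac{2}{2n-1}$ and $(2n-1)\mid N$: $\mathbf L=(\frac{2N}{2n-1},\ldots,\frac{2N}{2n-1},\frac{N}{2n-1},\frac{N}{2n-1},\frac{N}{2n-1})$ with $n-1$ entries equal to $\frac{2N}{2n-1}$.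
   Context: $\mathrm{TFF}(\alpha,N)$ is the set of weakly decreasing sequences of positive integers $(L_1,\ldots,L_K)$ such that there exist orthogonal projections $P_1,\ldots,P_K$ on $\mathbb{R}^N$ with $\operatorname{rank}P_i=L_i$ and $\sum_{i=1}^K P_i=\alpha\mathbf I$. Majorization: $\mathbf L\preccurlyeq\mathbf L'$ iff the total sums are equal and $\sum_{i\le k}L_i\le\sum_{i\le k}L'_i$ for all $k\le\min(K,K')$. *)

theory Defs
  imports "HOL-Analysis.Analysis"
begin

text \<open>Orthogonal projection on R^N (N = CARD('n)): symmetric idempotent real matrix.\<close>
definition orth_proj :: "real^'n^'n \<Rightarrow> bool" where
  "orth_proj P \<longleftrightarrow> P ** P = P \<and> transpose P = P"

text \<open>TFF(alpha, N) with N = CARD('n): weakly decreasing lists of positive integers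
  (L_1,...,L_K) realised as ranks of orthogonal projections summing to alpha I.\<close>
definition TFF :: "real \<Rightarrow> 'n::finite itself \<Rightarrow> nat list set" where
  "TFF \<alpha> _ = {L. sorted_wrt (\<ge>) L \<and> (\<forall>x\<in>set L. 0 < x) \<and>
     (\<exists>P :: nat \<Rightarrow> real^'n^'n.
        (\<forall>i<length L. orth_proj (P i) \<and> rank (P i) = L ! i) \<and>
        (\<Sum>i<length L. P i) = \<alpha> *\<^sub>R mat 1)}"

text \<open>Majorization L \<preccurlyeq> L'.\<close>
definition majorized :: "nat list \<Rightarrow> nat list \<Rightarrow> bool" where
  "majorized L L' \<longleftrightarrow> sum_list L = sum_list L' \<and>
     (\<forall>k\<le>min (length L) (length L'). sum_list (take k L) \<le> sum_list (take k L'))"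

definition maximal_elems :: "nat list set \<Rightarrow> nat list set" where
  "maximal_elems S = {L\<in>S. \<forall>L'\<in>S. majorized L L' \<longrightarrow> L' = L}"

end

theory Submission
  imports Defs
begin


definition isproj :: "'a::euclidean_space set \<Rightarrow> ('a \<Rightarrow> 'a) \<Rightarrow> bool" where
 "isproj V f \<longleftrightarrow> linear f \<and> (\<forall>x. f (f x) = f x) \<and> (\<forall>x y. inner (f x) y = inner x (f y)) \<and> (\<forall>x. f x \<in> V)"

definition famI :: "'a::euclidean_space set \<Rightarrow> real \<Rightarrow> 'i set \<Rightarrow> ('i \<Rightarrow> 'a \<Rightarrow> 'a) \<Rightarrow> bool" where
 "famI V \<alpha> I F \<longleftrightarrow> subspace V \<and> finite I \<and> (\<forall>j\<in>I. isproj V (F j)) \<and> (\<forall>x\<in>V. (\<Sum>j\<in>I. F j x) = \<alpha> *\<^sub>R x)"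

definition rk :: "('a::euclidean_space \<Rightarrow> 'a) \<Rightarrow> nat" where
 "rk f = dim (range f)"

definition orthonormal :: "'a::euclidean_space set \<Rightarrow> bool" where
 "orthonormal B \<longleftrightarrow> finite B \<and> pairwise orthogonal B \<and> (\<forall>b\<in>B. norm b = 1)"

lemma orthonormal_inner:
  assumes "orthonormal B" "b \<in> B" "c \<in> B"
  shows "b \<bullet> c = (if b = c then 1 else 0)"
  using assms unfolding orthonormal_def pairwise_def orthogonal_def
  by (metis norm_eq_1)

lemma orthonormal_expand:
  assumes B: "orthonormal B" and x: "x \<in> span B"
  shows "x = (\<Sum>b\<in>B. (x \<bullet> b) *\<^sub>R b)"
proof -
  have fin: "finite B" using B orthonormal_def by auto
  obtain u where u: "x = (\<Sum>b\<in>B. u b *\<^sub>R b)"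
    using x fin span_finite by blast
  have "x \<bullet> c = u c" if "c \<in> B" for c
  proof -
    have "x \<bullet> c = (\<Sum>b\<in>B. u b * (b \<bullet> c))" by (simp add: u inner_sum_left)
    also have "\<dots> = (\<Sum>b\<in>B. if b = c then u b else 0)"
      by (rule sum.cong) (auto simp: orthonormal_inner[OF B _ that])
    also have "\<dots> = u c" using fin that by simp
    finally show ?thesis .
  qed
  then show ?thesis using u by (metis (no_types, lifting) sum.cong)
qed

lemma orthonormal_parseval:
  assumes B: "orthonormal B" and x: "x \<in> span B"
  shows "x \<bullet> y = (\<Sum>b\<in>B. (x \<bullet> b) * (b \<bullet> y))"
proof -
  have "x \<bullet> y = (\<Sum>b\<in>B. (x \<bullet> b) *\<^sub>R b) \<bullet> y" using orthonormal_expand[OF B x] by simp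
  also have "\<dots> = (\<Sum>b\<in>B. (x \<bullet> b) * (b \<bullet> y))" by (simp add: inner_sum_left)
  finally show ?thesis .
qed

lemma orthonormal_basis_exists:
  fixes V :: "'a::euclidean_space set"
  assumes "subspace V"
  obtains B where "orthonormal B" "B \<subseteq> V" "span B = V" "card B = dim V"
proof -
  obtain B where "B \<subseteq> V" "pairwise orthogonal B" "\<And>x. x \<in> B \<Longrightarrow> norm x = 1"
              "independent B" "card B = dim V" "span B = V"
    using orthonormal_basis_subspace[OF assms] by blast
  then show ?thesis using that[of B] unfolding orthonormal_def
    by (simp add: independent_imp_finite)
qed

lemma isproj_fix: "isproj V f \<Longrightarrow> y \<in> range f \<Longrightarrow> f y = y"
  unfolding isproj_def by auto

lemma isproj_subspace_range: "isproj V f \<Longrightarrow> subspace (range f)"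
  unfolding isproj_def by (simp add: linear_subspace_image)

lemma isproj_sa: "isproj V f \<Longrightarrow> f x \<bullet> y = x \<bullet> f y"
  unfolding isproj_def by metis

lemma isproj_idem: "isproj V f \<Longrightarrow> f (f x) = f x"
  unfolding isproj_def by metis

lemma isproj_linear: "isproj V f \<Longrightarrow> linear f"
  unfolding isproj_def by metis

lemma isproj_in: "isproj V f \<Longrightarrow> f x \<in> V"
  unfolding isproj_def by metis

lemma isproj_range_sub: "isproj V f \<Longrightarrow> range f \<subseteq> V"
  unfolding isproj_def by auto

lemma rk_trace:
  assumes f: "isproj V f" and V: "subspace V" and B: "orthonormal B" "span B = V"
  shows "real (rk f) = (\<Sum>b\<in>B. f b \<bullet> b)"
proof -
  obtain C where C: "orthonormal C" "C \<subseteq> range f" "span C = range f" "card C = dim (range f)"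
    using orthonormal_basis_exists[OF isproj_subspace_range[OF f]] by blast
  have fc: "f c = c" if "c \<in> C" for c using that C(2) by (intro isproj_fix[OF f]) blast
  have cV: "c \<in> span B" if "c \<in> C" for c by (metis B(2) isproj_range_sub[OF f] C(2) subsetD that)
  have sa: "f x \<bullet> y = x \<bullet> f y" for x y using f by (rule isproj_sa)
  have fb: "f b \<bullet> b = (\<Sum>c\<in>C. (b \<bullet> c) * (c \<bullet> b))" for b
  proof -
    have "f b \<in> span C" by (simp add: C(3))
    then have "f b \<bullet> b = (\<Sum>c\<in>C. (f b \<bullet> c) * (c \<bullet> b))" by (rule orthonormal_parseval[OF C(1)])
    also have "\<dots> = (\<Sum>c\<in>C. (b \<bullet> c) * (c \<bullet> b))"
    proof (rule sum.cong)
      fix c assume "c \<in> C"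
      then show "(f b \<bullet> c) * (c \<bullet> b) = (b \<bullet> c) * (c \<bullet> b)" using sa[of b c] fc[of c] by simp
    qed simp
    finally show ?thesis .
  qed
  have "(\<Sum>b\<in>B. f b \<bullet> b) = (\<Sum>b\<in>B. \<Sum>c\<in>C. (b \<bullet> c) * (c \<bullet> b))" using fb by simp
  also have "\<dots> = (\<Sum>c\<in>C. \<Sum>b\<in>B. (b \<bullet> c) * (c \<bullet> b))"
    by (rule sum.swap)
  also have "\<dots> = (\<Sum>c\<in>C. c \<bullet> c)"
  proof (rule sum.cong)
    fix c assume c: "c \<in> C"
    have "c \<bullet> c = (\<Sum>b\<in>B. (c \<bullet> b) * (b \<bullet> c))" by (rule orthonormal_parseval[OF B(1) cV[OF c]])
    also have "\<dots> = (\<Sum>b\<in>B. (b \<bullet> c) * (c \<bullet> b))" by (simp add: mult.commute)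
    finally show "(\<Sum>b\<in>B. (b \<bullet> c) * (c \<bullet> b)) = c \<bullet> c" by simp
  qed simp
  also have "\<dots> = (\<Sum>c\<in>C. 1)"
  proof (rule sum.cong)
    fix c assume "c \<in> C"
    then have "norm c = 1" using C(1) unfolding orthonormal_def by blast
    then show "c \<bullet> c = 1" by (simp add: dot_square_norm)
  qed simp
  also have "\<dots> = real (rk f)" using C(4) by (simp add: rk_def)
  finally show ?thesis by simp
qed

lemma fam_trace:
  assumes F: "famI V \<alpha> I F"
  shows "(\<Sum>j\<in>I. real (rk (F j))) = \<alpha> * real (dim V)"
proof -
  have V: "subspace V" and finI: "finite I" using F famI_def by auto
  obtain B where B: "orthonormal B" "B \<subseteq> V" "span B = V" "card B = dim V"
    using orthonormal_basis_exists[OF V] by blast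
  have "(\<Sum>j\<in>I. real (rk (F j))) = (\<Sum>j\<in>I. \<Sum>b\<in>B. F j b \<bullet> b)"
    by (rule sum.cong) (use F B V in \<open>auto simp: famI_def intro!: rk_trace\<close>)
  also have "\<dots> = (\<Sum>b\<in>B. (\<Sum>j\<in>I. F j b) \<bullet> b)"
    by (subst sum.swap) (simp add: inner_sum_left)
  also have "\<dots> = (\<Sum>b\<in>B. \<alpha>)"
    by (rule sum.cong) (use F B in \<open>auto simp: famI_def orthonormal_def dot_square_norm\<close>)
  also have "\<dots> = \<alpha> * real (dim V)" using B(4) by simp
  finally show ?thesis .
qed

lemma isproj_quad: assumes "isproj V f" shows "f x \<bullet> x = f x \<bullet> f x"
  by (metis assms isproj_idem isproj_sa)

lemma isproj_quad_le: assumes f: "isproj V f" shows "f x \<bullet> x \<le> x \<bullet> x" "0 \<le> f x \<bullet> x"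
proof -
  have "0 \<le> (x - f x) \<bullet> (x - f x)" by simp
  also have "(x - f x) \<bullet> (x - f x) = x \<bullet> x - 2 * (f x \<bullet> x) + f x \<bullet> f x"
    by (simp add: inner_diff_left inner_diff_right inner_commute)
  finally show "f x \<bullet> x \<le> x \<bullet> x" using isproj_quad[OF f, of x] by simp
  show "0 \<le> f x \<bullet> x" using isproj_quad[OF f, of x] by simp
qed

lemma isproj_zero_if_orth:
  assumes f: "isproj V f" and o: "\<And>y. y \<in> range f \<Longrightarrow> x \<bullet> y = 0"
  shows "f x = 0"
proof -
  have "f x \<bullet> f x = x \<bullet> f (f x)" by (rule isproj_sa[OF f])
  also have "\<dots> = 0" using o by simp
  finally show ?thesis by simp
qed

lemma dim_span_UN:
  fixes W :: "'i \<Rightarrow> 'a::euclidean_space set"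
  assumes fin: "finite I"
  shows "dim (\<Union>j\<in>I. W j) \<le> (\<Sum>j\<in>I. dim (W j))"
proof -
  have "\<forall>j\<in>I. \<exists>B. B \<subseteq> W j \<and> independent B \<and> W j \<subseteq> span B \<and> card B = dim (W j)"
  proof
    fix j
    obtain B where "B \<subseteq> W j" "independent B" "W j \<subseteq> span B" "card B = dim (W j)"
      by (rule basis_exists)
    then show "\<exists>B. B \<subseteq> W j \<and> independent B \<and> W j \<subseteq> span B \<and> card B = dim (W j)" by blast
  qed
  from bchoice[OF this] obtain B where B0: "\<forall>j\<in>I. B j \<subseteq> W j \<and> independent (B j) \<and> W j \<subseteq> span (B j) \<and> card (B j) = dim (W j)"
    by blast
  then have B: "\<And>j. j \<in> I \<Longrightarrow> B j \<subseteq> W j \<and> independent (B j) \<and> W j \<subseteq> span (B j) \<and> card (B j) = dim (W j)"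
    by blast
  have finB: "finite (\<Union>j\<in>I. B j)"
  proof (rule finite_UN_I[OF fin])
    fix j assume "j \<in> I" then show "finite (B j)" using B independent_imp_finite by blast
  qed
  have "(\<Union>j\<in>I. W j) \<subseteq> span (\<Union>j\<in>I. B j)"
  proof
    fix x assume "x \<in> (\<Union>j\<in>I. W j)"
    then obtain j where j: "j \<in> I" "x \<in> W j" by blast
    then have "x \<in> span (B j)" using B by blast
    moreover have "span (B j) \<subseteq> span (\<Union>j\<in>I. B j)" using j by (intro span_mono) blast
    ultimately show "x \<in> span (\<Union>j\<in>I. B j)" by blast
  qed
  then have "dim (\<Union>j\<in>I. W j) \<le> card (\<Union>j\<in>I. B j)" using finB by (rule dim_le_card)
  also have "\<dots> \<le> (\<Sum>j\<in>I. card (B j))" using fin by (rule card_UN_le)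
  also have "\<dots> = (\<Sum>j\<in>I. dim (W j))" using B by simp
  finally show ?thesis .
qed

lemma famI_subspace: "famI V \<alpha> I F \<Longrightarrow> subspace V" by (simp add: famI_def)
lemma famI_finite: "famI V \<alpha> I F \<Longrightarrow> finite I" by (simp add: famI_def)
lemma famI_proj: "famI V \<alpha> I F \<Longrightarrow> j \<in> I \<Longrightarrow> isproj V (F j)" by (simp add: famI_def)
lemma famI_sum: "famI V \<alpha> I F \<Longrightarrow> x \<in> V \<Longrightarrow> (\<Sum>j\<in>I. F j x) = \<alpha> *\<^sub>R x" by (simp add: famI_def)

lemma spanning_lemma:
  fixes V :: "'a::euclidean_space set"
  assumes V: "subspace V" and fin: "finite T" and G: "\<And>j. j \<in> T \<Longrightarrow> isproj V (G j)"
    and K: "\<And>x. x \<in> V \<Longrightarrow> (\<And>j. j \<in> T \<Longrightarrow> G j x = 0) \<Longrightarrow> x = 0"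
  shows "dim V \<le> (\<Sum>j\<in>T. rk (G j))"
proof -
  let ?U = "\<Union>j\<in>T. range (G j)"
  have UV: "?U \<subseteq> V"
  proof
    fix y assume "y \<in> ?U"
    then obtain j z where "j \<in> T" "y = G j z" by blast
    then show "y \<in> V" using G isproj_in by metis
  qed
  have "span ?U = V"
  proof (rule ccontr)
    assume ne: "span ?U \<noteq> V"
    have "span ?U \<subseteq> span V" using UV by (rule span_mono)
    have sV: "span V = V" using V by (rule span_eq_iff[THEN iffD2])
    then have "span ?U \<subset> span V" using ne \<open>span ?U \<subseteq> span V\<close> by blast
    then obtain x where x: "x \<noteq> 0" "x \<in> span V" "\<And>y. y \<in> span ?U \<Longrightarrow> orthogonal x y"
      by (meson orthogonal_to_subspace_exists_gen)
    have xV: "x \<in> V" using x(2) sV by simp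
    have "G j x = 0" if j: "j \<in> T" for j
    proof (rule isproj_zero_if_orth[OF G[OF j]])
      fix y assume "y \<in> range (G j)"
      then have "y \<in> ?U" using j by blast
      then have "y \<in> span ?U" by (rule span_base)
      then show "x \<bullet> y = 0" using x(3) orthogonal_def by blast
    qed
    then show False using K[OF xV] x(1) by blast
  qed
  then have "dim V = dim ?U" by (metis dim_span)
  also have "\<dots> \<le> (\<Sum>j\<in>T. dim (range (G j)))" using fin by (rule dim_span_UN)
  finally show ?thesis by (simp add: rk_def)
qed

lemma G1:
  assumes F: "famI V \<alpha> I F" and S: "S \<subseteq> I" and c: "real (card S) < \<alpha>"
  shows "real (\<Sum>j\<in>S. rk (F j)) \<le> (\<alpha> - 1) * real (dim V)"
proof -
  have V: "subspace V" using F by (rule famI_subspace)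
  have fin: "finite I" using F by (rule famI_finite)
  have finS: "finite S" by (rule finite_subset[OF S fin])
  have dimle: "dim V \<le> (\<Sum>j\<in>I-S. rk (F j))"
  proof (rule spanning_lemma[OF V])
    show "finite (I - S)" using fin by simp
    show "\<And>j. j \<in> I - S \<Longrightarrow> isproj V (F j)" by (rule famI_proj[OF F]) blast
    fix x assume xV: "x \<in> V" and z: "\<And>j. j \<in> I - S \<Longrightarrow> F j x = 0"
    have "\<alpha> *\<^sub>R x = (\<Sum>j\<in>I. F j x)" using famI_sum[OF F xV] by simp
    also have "\<dots> = (\<Sum>j\<in>S. F j x) + (\<Sum>j\<in>I-S. F j x)"
      by (metis add.commute sum.subset_diff[OF S fin])
    also have "(\<Sum>j\<in>I-S. F j x) = 0" using z by simp
    finally have ax: "\<alpha> *\<^sub>R x = (\<Sum>j\<in>S. F j x)" by simp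
    have "\<alpha> * (x \<bullet> x) = (\<Sum>j\<in>S. F j x \<bullet> x)"
      using arg_cong[OF ax, of "\<lambda>v. v \<bullet> x"] by (simp add: inner_sum_left)
    also have "\<dots> \<le> (\<Sum>j\<in>S. x \<bullet> x)"
    proof (rule sum_mono)
      fix j assume "j \<in> S"
      then have "isproj V (F j)" using S by (intro famI_proj[OF F]) blast
      then show "F j x \<bullet> x \<le> x \<bullet> x" by (rule isproj_quad_le)
    qed
    also have "\<dots> = real (card S) * (x \<bullet> x)" by simp
    finally have "(\<alpha> - real (card S)) * (x \<bullet> x) \<le> 0" by (simp add: algebra_simps)
    then have "x \<bullet> x \<le> 0" using c by (simp add: mult_le_0_iff)
    then have "x \<bullet> x = 0" using inner_ge_zero[of x] by linarith
    then show "x = 0" by simp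
  qed
  have "(\<Sum>j\<in>I. real (rk (F j))) = \<alpha> * real (dim V)" by (rule fam_trace[OF F])
  moreover have "(\<Sum>j\<in>I. real (rk (F j))) = (\<Sum>j\<in>S. real (rk (F j))) + (\<Sum>j\<in>I-S. real (rk (F j)))"
    by (metis add.commute sum.subset_diff[OF S fin])
  moreover have "real (dim V) \<le> (\<Sum>j\<in>I-S. real (rk (F j)))"
    using \<open>dim V \<le> (\<Sum>j\<in>I-S. rk (F j))\<close> by (metis of_nat_le_iff of_nat_sum)
  ultimately have "(\<Sum>j\<in>S. real (rk (F j))) \<le> (\<alpha> - 1) * real (dim V)"
    by (simp add: algebra_simps)
  then show ?thesis by simp
qed

lemma eq_by_inner: fixes a b :: "'a::real_inner" assumes "\<And>y. a \<bullet> y = b \<bullet> y" shows "a = b"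
proof -
  have "(a - b) \<bullet> (a - b) = 0" using assms[of "a - b"] by (simp add: inner_diff_left)
  then show ?thesis by simp
qed

lemma proj_exists:
  fixes V :: "'a::euclidean_space set"
  assumes V: "subspace V"
  obtains p where "isproj V p" "\<And>x. x \<in> V \<Longrightarrow> p x = x"
proof -
  obtain B where B: "orthonormal B" "B \<subseteq> V" "span B = V" "card B = dim V"
    using orthonormal_basis_exists[OF V] by blast
  define p where "p x = (\<Sum>b\<in>B. (x \<bullet> b) *\<^sub>R b)" for x
  have pfx: "p x = x" if "x \<in> V" for x
    using orthonormal_expand[OF B(1), of x] that B(3) by (simp add: p_def)
  have lin: "linear p"
  proof (rule linearI)
    fix x y show "p (x + y) = p x + p y"
      by (simp add: p_def inner_add_left scaleR_add_left sum.distrib)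
  next
    fix c x show "p (c *\<^sub>R x) = c *\<^sub>R p x"
      by (simp add: p_def scaleR_sum_right)
  qed
  have inV: "p x \<in> V" for x
  proof -
    have "p x \<in> span B" unfolding p_def
      by (rule span_sum) (simp add: span_base span_scale)
    then show ?thesis using B(3) by simp
  qed
  have sa: "p x \<bullet> y = x \<bullet> p y" for x y
    by (simp add: p_def inner_sum_left inner_sum_right mult.commute inner_commute)
  have "isproj V p" unfolding isproj_def using lin inV sa pfx by simp
  then show ?thesis using that pfx by blast
qed

lemma proj_comm:
  assumes F: "isproj V f" and p: "isproj V p" and pfix: "\<And>x. x \<in> V \<Longrightarrow> p x = x"
  shows "f (p x) = f x"
proof (rule eq_by_inner)
  fix y
  have "f (p x) \<bullet> y = p x \<bullet> f y" by (rule isproj_sa[OF F])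
  also have "\<dots> = x \<bullet> p (f y)" by (rule isproj_sa[OF p])
  also have "p (f y) = f y" using pfix isproj_in[OF F] by blast
  also have "x \<bullet> f y = f x \<bullet> y" by (rule isproj_sa[OF F, symmetric])
  finally show "f (p x) \<bullet> y = f x \<bullet> y" .
qed

lemma compl_proj:
  assumes F: "isproj V f" and p: "isproj V p" and pfix: "\<And>x. x \<in> V \<Longrightarrow> p x = x"
    and V: "subspace V"
  shows "isproj V (\<lambda>x. p x - f x)"
proof -
  have lin: "linear (\<lambda>x. p x - f x)"
    using isproj_linear[OF F] isproj_linear[OF p] by (simp add: linear_compose_sub)
  have pf: "p (f x) = f x" for x using pfix isproj_in[OF F] by blast
  have idem: "p (p x - f x) - f (p x - f x) = p x - f x" for x
  proof -
    have "p (p x - f x) = p x - f x" using pfix isproj_in[OF p] isproj_in[OF F] V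
      by (simp add: subspace_diff)
    moreover have "f (p x - f x) = f x - f x"
      using linear_diff[OF isproj_linear[OF F]] proj_comm[OF F p pfix] isproj_idem[OF F] by simp
    ultimately show ?thesis by simp
  qed
  have sa: "(p x - f x) \<bullet> y = x \<bullet> (p y - f y)" for x y
    by (simp add: inner_diff_left inner_diff_right isproj_sa[OF p] isproj_sa[OF F])
  have inV: "p x - f x \<in> V" for x using V isproj_in[OF p] isproj_in[OF F] by (simp add: subspace_diff)
  show ?thesis unfolding isproj_def using lin idem sa inV by simp
qed

lemma G2:
  assumes F: "famI V \<alpha> I F" and S: "S \<subseteq> I" and c: "real (card S) > \<alpha>"
  shows "real (\<Sum>j\<in>S. rk (F j)) \<le> (real (card S) - 1) * real (dim V)"
proof -
  have V: "subspace V" using F by (rule famI_subspace)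
  have fin: "finite I" using F by (rule famI_finite)
  have finS: "finite S" by (rule finite_subset[OF S fin])
  obtain p where p: "isproj V p" and pfix: "\<And>x. x \<in> V \<Longrightarrow> p x = x"
    using proj_exists[OF V] by blast
  obtain B where B: "orthonormal B" "B \<subseteq> V" "span B = V" "card B = dim V"
    using orthonormal_basis_exists[OF V] by blast
  have FjS: "isproj V (F j)" if "j \<in> S" for j using S that by (intro famI_proj[OF F]) blast
  define G where "G j = (\<lambda>x. p x - F j x)" for j
  have G: "isproj V (G j)" if "j \<in> S" for j
    unfolding G_def by (rule compl_proj[OF FjS[OF that] p pfix V])
  have rkG: "real (rk (G j)) = real (dim V) - real (rk (F j))" if j: "j \<in> S" for j
  proof -
    have "real (rk (G j)) = (\<Sum>b\<in>B. G j b \<bullet> b)" by (rule rk_trace[OF G[OF j] V B(1) B(3)])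
    also have "\<dots> = (\<Sum>b\<in>B. b \<bullet> b - F j b \<bullet> b)"
    proof (rule sum.cong)
      fix b assume "b \<in> B" then have "p b = b" using pfix B(2) by blast
      then show "G j b \<bullet> b = b \<bullet> b - F j b \<bullet> b" by (simp add: G_def inner_diff_left)
    qed simp
    also have "\<dots> = (\<Sum>b\<in>B. 1) - (\<Sum>b\<in>B. F j b \<bullet> b)"
    proof -
      have "(\<Sum>b\<in>B. b \<bullet> b) = (\<Sum>b\<in>B. 1)"
      proof (rule sum.cong)
        fix b assume "b \<in> B" then have "norm b = 1" using B(1) unfolding orthonormal_def by blast
        then show "b \<bullet> b = 1" by (simp add: dot_square_norm)
      qed simp
      then show ?thesis by (simp add: sum_subtractf)
    qed
    also have "(\<Sum>b\<in>B. F j b \<bullet> b) = real (rk (F j))" by (rule rk_trace[OF FjS[OF j] V B(1) B(3), symmetric])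
    finally show ?thesis using B(4) by simp
  qed
  have dimle: "dim V \<le> (\<Sum>j\<in>S. rk (G j))"
  proof (rule spanning_lemma[OF V finS G])
    fix x assume xV: "x \<in> V" and z: "\<And>j. j \<in> S \<Longrightarrow> G j x = 0"
    have Fx: "F j x = x" if "j \<in> S" for j using z[OF that] pfix[OF xV] by (simp add: G_def)
    have "\<alpha> * (x \<bullet> x) = (\<Sum>j\<in>I. F j x) \<bullet> x" using famI_sum[OF F xV] by simp
    also have "\<dots> = (\<Sum>j\<in>I. F j x \<bullet> x)" by (simp add: inner_sum_left)
    also have "\<dots> = (\<Sum>j\<in>S. F j x \<bullet> x) + (\<Sum>j\<in>I-S. F j x \<bullet> x)"
      by (metis add.commute sum.subset_diff[OF S fin])
    also have "\<dots> \<ge> (\<Sum>j\<in>S. F j x \<bullet> x)"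
    proof -
      have "0 \<le> (\<Sum>j\<in>I-S. F j x \<bullet> x)"
      proof (rule sum_nonneg)
        fix j assume "j \<in> I - S"
        then have "isproj V (F j)" by (intro famI_proj[OF F]) blast
        then show "0 \<le> F j x \<bullet> x" by (rule isproj_quad_le)
      qed
      then show ?thesis by simp
    qed
    also have "(\<Sum>j\<in>S. F j x \<bullet> x) = (\<Sum>j\<in>S. x \<bullet> x)" using Fx by simp
    also have "\<dots> = real (card S) * (x \<bullet> x)" by simp
    finally have "(real (card S) - \<alpha>) * (x \<bullet> x) \<le> 0" by (simp add: algebra_simps)
    then have "x \<bullet> x \<le> 0" using c by (simp add: mult_le_0_iff)
    then have "x \<bullet> x = 0" using inner_ge_zero[of x] by linarith
    then show "x = 0" by simp
  qed
  have "real (dim V) \<le> (\<Sum>j\<in>S. real (rk (G j)))"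
    using dimle by (metis of_nat_le_iff of_nat_sum)
  also have "\<dots> = (\<Sum>j\<in>S. real (dim V) - real (rk (F j)))" using rkG by simp
  also have "\<dots> = real (card S) * real (dim V) - (\<Sum>j\<in>S. real (rk (F j)))"
    by (simp add: sum_subtractf)
  finally show ?thesis by (simp add: algebra_simps)
qed



definition slot :: "'k::finite \<Rightarrow> 'a::real_vector \<Rightarrow> 'a^'k" where
  "slot k w = (\<chi> i. if i = k then w else 0)"

lemma slot_nth[simp]: "slot k w $ i = (if i = k then w else 0)"
  by (simp add: slot_def)

lemma slot_inner: "slot k w \<bullet> Y = w \<bullet> (Y $ k)"
proof -
  have "(\<Sum>i\<in>UNIV. slot k w $ i \<bullet> Y $ i) = (\<Sum>i\<in>UNIV. if i = k then w \<bullet> Y $ k else 0)"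
    by (rule sum.cong) auto
  then show ?thesis by (simp add: inner_vec_def)
qed

lemma inner_slot: "Y \<bullet> slot k w = (Y $ k) \<bullet> w"
  by (metis inner_commute slot_inner)

lemma slot_add: "slot k (a + b) = slot k a + slot k b" by (simp add: vec_eq_iff)
lemma slot_scale: "slot k (c *\<^sub>R a) = c *\<^sub>R slot k a" by (simp add: vec_eq_iff)
lemma slot_inj: "slot k a = slot k b \<Longrightarrow> a = b" by (metis slot_nth)
lemma linear_slot: "linear (slot k)" by (rule linearI) (simp_all add: slot_add slot_scale)

lemma lin_add: "linear f \<Longrightarrow> f (x + y) = f x + f y" by (rule linear_add)
lemma lin_scale: "linear f \<Longrightarrow> f (c *\<^sub>R x) = c *\<^sub>R f x" by (rule linear_scale)
lemma lin_diff: "linear f \<Longrightarrow> f (x - y) = f x - f y" by (rule linear_diff)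

lemma functor_core:
  fixes F :: "'k::finite \<Rightarrow> 'a::euclidean_space \<Rightarrow> 'a"
  assumes F: "famI V \<alpha> UNIV F" and a1: "\<alpha> > 1"
  shows "\<exists>(T :: 'k \<Rightarrow> 'a^'k \<Rightarrow> 'a^'k) KK. famI KK (\<alpha>/(\<alpha>-1)) UNIV T \<and> (\<forall>k. rk (T k) = rk (F k))"
proof -
  have V: "subspace V" using F by (rule famI_subspace)
  have Fp: "isproj V (F k)" for k by (rule famI_proj[OF F]) simp
  have lin: "linear (F k)" for k using isproj_linear[OF Fp] .
  have idem: "F k (F k x) = F k x" for k x using isproj_idem[OF Fp] .
  have sa: "F k x \<bullet> y = x \<bullet> F k y" for k x y using isproj_sa[OF Fp] .
  have inV: "F k x \<in> V" for k x using isproj_in[OF Fp] .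
  have Fsum: "x \<in> V \<Longrightarrow> (\<Sum>i\<in>UNIV. F i x) = \<alpha> *\<^sub>R x" for x by (rule famI_sum[OF F])
  have a0: "\<alpha> \<noteq> 0" using a1 by simp
  have F0[simp]: "F k 0 = 0" for k using linear_0[OF lin] .
  define PiA :: "'a^'k \<Rightarrow> 'a^'k" where "PiA Y = (\<chi> i. F i (Y$i))" for Y
  define Sig :: "'a^'k \<Rightarrow> 'a" where "Sig Y = (\<Sum>i\<in>UNIV. F i (Y$i))" for Y
  define Psi :: "'a \<Rightarrow> 'a^'k" where "Psi x = (\<chi> i. F i x)" for x
  define E where "E Y = (1/\<alpha>) *\<^sub>R Psi (Sig Y)" for Y
  define D where "D Y = PiA Y - E Y" for Y
  define Pk :: "'k \<Rightarrow> 'a^'k \<Rightarrow> 'a^'k" where "Pk k Y = slot k (F k (Y$k))" for k Y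
  define c where "c = \<alpha>/(\<alpha>-1)"
  define T where "T k Y = c *\<^sub>R D (Pk k (D Y))" for k Y
  define KK where "KK = range D"
  have c1: "c * (1 - 1/\<alpha>) = 1" using a1 by (simp add: c_def field_simps)
  have linPiA: "linear PiA"
    by (rule linearI) (simp_all add: PiA_def vec_eq_iff lin_add[OF lin] lin_scale[OF lin])
  have linSig: "linear Sig"
    by (rule linearI) (simp_all add: Sig_def lin_add[OF lin] lin_scale[OF lin] sum.distrib scaleR_sum_right)
  have linPsi: "linear Psi"
    by (rule linearI) (simp_all add: Psi_def vec_eq_iff lin_add[OF lin] lin_scale[OF lin])
  have linE: "linear E"
    by (rule linearI) (simp_all add: E_def lin_add[OF linSig] lin_scale[OF linSig] lin_add[OF linPsi] lin_scale[OF linPsi] scaleR_add_right)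
  have linD: "linear D"
    unfolding D_def by (rule linear_compose_sub[OF linPiA linE])
  have linPk: "linear (Pk k)" for k
    by (rule linearI) (simp_all add: Pk_def lin_add[OF lin] lin_scale[OF lin] slot_add slot_scale)
  have I1: "PiA (PiA Y) = PiA Y" for Y by (simp add: PiA_def idem)
  have I2: "Sig (PiA Y) = Sig Y" for Y by (simp add: PiA_def Sig_def idem)
  have I3: "PiA (Psi x) = Psi x" for x by (simp add: PiA_def Psi_def idem)
  have I4: "Sig Y \<in> V" for Y unfolding Sig_def by (rule subspace_sum[OF V]) (simp add: inV)
  have I5: "Sig (Psi x) = \<alpha> *\<^sub>R x" if "x \<in> V" for x
  proof -
    have "Sig (Psi x) = (\<Sum>i\<in>UNIV. F i x)" by (simp add: Sig_def Psi_def idem)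
    then show ?thesis using Fsum[OF that] by simp
  qed
  have I6: "E (E Y) = E Y" for Y
    using a0 by (simp add: E_def lin_scale[OF linSig] I5[OF I4])
  have I7: "PiA (E Y) = E Y" for Y by (simp add: E_def lin_scale[OF linPiA] I3)
  have I8: "E (PiA Y) = E Y" for Y by (simp add: E_def I2)
  have I9: "D (D Y) = D Y" for Y
    by (simp add: D_def lin_diff[OF linPiA] lin_diff[OF linE] I1 I6 I7 I8)
  have I10: "PiA (D Y) = D Y" for Y by (simp add: D_def lin_diff[OF linPiA] I1 I7)
  have I11: "Pk k (PiA Y) = Pk k Y" for k Y by (simp add: Pk_def PiA_def idem)
  have I11b: "PiA (Pk k Y) = Pk k Y" for k Y by (simp add: Pk_def PiA_def idem vec_eq_iff)
  have I12: "Pk k (Pk k Y) = Pk k Y" for k Y by (simp add: Pk_def idem)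
  have Sig_slot: "Sig (slot k w) = F k w" for k w
  proof -
    have "Sig (slot k w) = (\<Sum>i\<in>UNIV. if i = k then F k w else 0)"
      unfolding Sig_def by (rule sum.cong) (auto simp: linear_0[OF lin])
    then show ?thesis by simp
  qed
  have I13: "Sig (Pk k Y) = F k (Y$k)" for k Y by (simp add: Pk_def Sig_slot idem)
  have I14: "Pk k (Psi x) = slot k (F k x)" for k x by (simp add: Pk_def Psi_def idem)
  have I15: "Pk k (E (Pk k Y)) = (1/\<alpha>) *\<^sub>R Pk k Y" for k Y
  proof -
    have "Pk k (E (Pk k Y)) = (1/\<alpha>) *\<^sub>R Pk k (Psi (Sig (Pk k Y)))"
      by (simp add: E_def lin_scale[OF linPk])
    also have "\<dots> = (1/\<alpha>) *\<^sub>R slot k (F k (F k (Y$k)))" by (simp only: I13 I14)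
    also have "\<dots> = (1/\<alpha>) *\<^sub>R Pk k Y" by (simp add: idem Pk_def)
    finally show ?thesis .
  qed
  have I16: "Pk k (D (Pk k Y)) = (1 - 1/\<alpha>) *\<^sub>R Pk k Y" for k Y
    by (simp add: D_def lin_diff[OF linPk] I11 I12 I15 I11b algebra_simps)
  have I17: "(\<Sum>k\<in>UNIV. Pk k Y) = PiA Y" for Y
  proof -
    have "(\<Sum>k\<in>UNIV. Pk k Y) $ i = PiA Y $ i" for i
    proof -
      have "(\<Sum>k\<in>UNIV. Pk k Y) $ i = (\<Sum>k\<in>UNIV. if k = i then F i (Y$i) else 0)"
        unfolding sum_component by (rule sum.cong) (auto simp: Pk_def)
      then show ?thesis by (simp add: PiA_def)
    qed
    then show ?thesis by (simp add: vec_eq_iff)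
  qed
  have saPiA: "PiA Y \<bullet> Z = Y \<bullet> PiA Z" for Y Z by (simp add: PiA_def inner_vec_def sa)
  have saPsi: "Psi x \<bullet> Y = x \<bullet> Sig Y" for x Y by (simp add: Psi_def Sig_def inner_vec_def sa inner_sum_right)
  have saE: "E Y \<bullet> Z = Y \<bullet> E Z" for Y Z
  proof -
    have "E Y \<bullet> Z = (1/\<alpha>) * (Sig Y \<bullet> Sig Z)" by (simp add: E_def saPsi)
    also have "\<dots> = Y \<bullet> E Z"
    proof -
      have "Y \<bullet> Psi (Sig Z) = Sig Y \<bullet> Sig Z" by (metis inner_commute saPsi)
      then show ?thesis by (simp add: E_def)
    qed
    finally show ?thesis .
  qed
  have saD: "D Y \<bullet> Z = Y \<bullet> D Z" for Y Z by (simp add: D_def inner_diff_left inner_diff_right saPiA saE)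
  have saPk: "Pk k Y \<bullet> Z = Y \<bullet> Pk k Z" for k Y Z
    by (simp add: Pk_def slot_inner inner_slot sa)
  have T_idem: "T k (T k Y) = T k Y" for k Y
  proof -
    have "T k (T k Y) = c *\<^sub>R D (Pk k (D (c *\<^sub>R D (Pk k (D Y)))))" by (simp add: T_def)
    also have "\<dots> = (c * c) *\<^sub>R D (Pk k (D (Pk k (D Y))))"
      by (simp add: lin_scale[OF linD] lin_scale[OF linPk] I9)
    also have "\<dots> = (c * c * (1 - 1/\<alpha>)) *\<^sub>R D (Pk k (D Y))"
      by (simp add: I16 lin_scale[OF linD])
    also have "\<dots> = T k Y" using c1 by (simp add: T_def mult.assoc)
    finally show ?thesis .
  qed
  have linT: "linear (T k)" for k
    by (rule linearI) (simp_all add: T_def lin_add[OF linD] lin_add[OF linPk] lin_scale[OF linD] lin_scale[OF linPk] scaleR_add_right)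
  have T_sa: "T k Y \<bullet> Z = Y \<bullet> T k Z" for k Y Z
    by (simp add: T_def saD saPk)
  have T_in: "T k Y \<in> KK" for k Y
    unfolding KK_def T_def by (metis lin_scale[OF linD] rangeI)
  have KKsub: "subspace KK" unfolding KK_def by (rule linear_subspace_image[OF linD subspace_UNIV])
  have T_sum: "(\<Sum>k\<in>UNIV. T k Y) = c *\<^sub>R Y" if "Y \<in> KK" for Y
  proof -
    from that obtain Z where Z: "Y = D Z" unfolding KK_def by blast
    have "(\<Sum>k\<in>UNIV. T k Y) = c *\<^sub>R D (\<Sum>k\<in>UNIV. Pk k (D Y))"
      by (simp add: T_def scaleR_sum_right linear_sum[OF linD])
    also have "\<dots> = c *\<^sub>R Y" by (simp add: I17 I10 I9 Z)
    finally show ?thesis .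
  qed
  have T_proj: "isproj KK (T k)" for k unfolding isproj_def using linT T_idem T_sa T_in by blast
  have fam: "famI KK c UNIV T" unfolding famI_def using KKsub T_proj T_sum by simp
  have rkT: "rk (T k) = rk (F k)" for k
  proof -
    define phi where "phi w = c *\<^sub>R D (slot k w)" for w
    have linphi: "linear phi"
      by (rule linearI) (simp_all add: phi_def lin_add[OF linD] slot_add lin_scale[OF linD] slot_scale scaleR_add_right)
    have slotfix: "Pk k (slot k w) = slot k w" if "w \<in> range (F k)" for w
      using that by (auto simp: Pk_def idem)
    have r1: "range (T k) \<subseteq> phi ` range (F k)"
    proof
      fix Y assume "Y \<in> range (T k)"
      then obtain X where "Y = T k X" by blast
      then have "Y = phi (F k (D X $ k))" by (simp add: T_def phi_def Pk_def)
      then show "Y \<in> phi ` range (F k)" by blast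
    qed
    have r2: "phi ` range (F k) \<subseteq> range (T k)"
    proof
      fix Y assume "Y \<in> phi ` range (F k)"
      then obtain w where w: "w \<in> range (F k)" "Y = phi w" by blast
      have "T k (phi w) = (c * c) *\<^sub>R D (Pk k (D (D (slot k w))))"
        by (simp add: T_def phi_def lin_scale[OF linD] lin_scale[OF linPk])
      also have "\<dots> = (c * c) *\<^sub>R D (Pk k (D (Pk k (slot k w))))" by (simp add: I9 slotfix[OF w(1)])
      also have "\<dots> = (c * c * (1 - 1/\<alpha>)) *\<^sub>R D (Pk k (slot k w))" by (simp add: I16 lin_scale[OF linD])
      also have "\<dots> = phi w" using c1 by (simp add: phi_def slotfix[OF w(1)] mult.assoc)
      finally show "Y \<in> range (T k)" using w by (metis rangeI)
    qed
    have inj: "inj_on phi (span (range (F k)))"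
    proof (rule inj_onI)
      fix u w assume u: "u \<in> span (range (F k))" and w: "w \<in> span (range (F k))" and e: "phi u = phi w"
      have sub: "span (range (F k)) = range (F k)"
        using isproj_subspace_range[OF Fp] by (simp add: span_eq_iff)
      have "Pk k (phi v) = slot k v" if "v \<in> range (F k)" for v
      proof -
        have "Pk k (phi v) = c *\<^sub>R Pk k (D (Pk k (slot k v)))"
          by (simp add: phi_def lin_scale[OF linPk] slotfix[OF that])
        also have "\<dots> = c *\<^sub>R ((1 - 1/\<alpha>) *\<^sub>R Pk k (slot k v))" by (simp only: I16)
        also have "\<dots> = slot k v" using c1 by (simp add: slotfix[OF that])
        finally show ?thesis .
      qed
      then have "slot k u = slot k w" using u w e sub by metis
      then show "u = w" by (rule slot_inj)
    qed
    have "range (T k) = phi ` range (F k)" using r1 r2 by blast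
    then have "rk (T k) = dim (phi ` range (F k))" by (simp add: rk_def)
    also have "\<dots> = dim (range (F k))" by (rule dim_image_eq[OF linphi inj])
    finally show ?thesis by (simp add: rk_def)
  qed
  show ?thesis using fam rkT unfolding c_def by blast
qed

lemma isometry_inner:
  assumes lf: "linear f" and S: "subspace S" and n: "\<And>x. x \<in> S \<Longrightarrow> norm (f x) = norm x"
    and x: "x \<in> S" and y: "y \<in> S"
  shows "f x \<bullet> f y = x \<bullet> y"
proof -
  have sq: "f z \<bullet> f z = z \<bullet> z" if "z \<in> S" for z
    using n[OF that] by (metis dot_square_norm)
  have xy: "x + y \<in> S" using S x y by (simp add: subspace_add)
  have "f (x + y) \<bullet> f (x + y) = (x + y) \<bullet> (x + y)" by (rule sq[OF xy])
  then have "f x \<bullet> f x + 2 * (f x \<bullet> f y) + f y \<bullet> f y = x \<bullet> x + 2 * (x \<bullet> y) + y \<bullet> y"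
    by (simp add: lin_add[OF lf] inner_add_left inner_add_right inner_commute)
  then show ?thesis using sq[OF x] sq[OF y] by simp
qed

lemma transport:
  fixes KK :: "'x::euclidean_space set" and V' :: "'y::euclidean_space set"
  assumes T: "famI KK c I T" and V': "subspace V'" and d: "dim V' = dim KK"
  shows "\<exists>G. famI V' c I G \<and> (\<forall>j\<in>I. rk (G j) = rk (T j))"
proof -
  have KK: "subspace KK" using T by (rule famI_subspace)
  have fin: "finite I" using T by (rule famI_finite)
  have Tp: "isproj KK (T j)" if "j \<in> I" for j using that by (rule famI_proj[OF T])
  obtain f g where f: "linear f" "linear g" "f ` KK = V'" "g ` V' = KK"
      "\<And>x. x \<in> KK \<Longrightarrow> norm (f x) = norm x"
      "\<And>x. x \<in> V' \<Longrightarrow> norm (g x) = norm x" "\<And>x. x \<in> KK \<Longrightarrow> g (f x) = x" "\<And>x. x \<in> V' \<Longrightarrow> f (g x) = x"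
    using isometries_subspaces[OF KK V' d[symmetric]] by metis
  obtain p where p: "isproj V' p" and pfix: "\<And>x. x \<in> V' \<Longrightarrow> p x = x"
    using proj_exists[OF V'] by blast
  have finV: "f x \<in> V'" if "x \<in> KK" for x using f(3) that by blast
  have ginK: "g x \<in> KK" if "x \<in> V'" for x using f(4) that by blast
  have gpK: "g (p y) \<in> KK" for y by (rule ginK[OF isproj_in[OF p]])
  define G where "G j y = f (T j (g (p y)))" for j y
  have Gin: "G j y \<in> V'" if "j \<in> I" for j y
    unfolding G_def by (rule finV[OF isproj_in[OF Tp[OF that]]])
  have Gproj: "isproj V' (G j)" if j: "j \<in> I" for j
  proof -
    have lT: "linear (T j)" by (rule isproj_linear[OF Tp[OF j]])
    have lp: "linear p" by (rule isproj_linear[OF p])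
    have lin: "linear (G j)" unfolding G_def
      by (rule linearI) (simp_all add: lin_add[OF lT] lin_add[OF lp] lin_add[OF f(1)] lin_add[OF f(2)]
          lin_scale[OF lT] lin_scale[OF lp] lin_scale[OF f(1)] lin_scale[OF f(2)])
    have idem: "G j (G j y) = G j y" for y
    proof -
      have "p (G j y) = G j y" by (rule pfix[OF Gin[OF j]])
      then have "G j (G j y) = f (T j (g (f (T j (g (p y))))))" by (simp add: G_def)
      also have "\<dots> = f (T j (T j (g (p y))))" using f(7)[OF isproj_in[OF Tp[OF j]]] by simp
      also have "\<dots> = G j y" by (simp add: G_def isproj_idem[OF Tp[OF j]])
      finally show ?thesis .
    qed
    have sa: "G j y \<bullet> z = y \<bullet> G j z" for y z
    proof -
      have "G j y \<bullet> z = p (G j y) \<bullet> z" by (simp add: pfix[OF Gin[OF j]])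
      also have "\<dots> = G j y \<bullet> p z" by (rule isproj_sa[OF p])
      also have "p z = f (g (p z))" using f(8)[OF isproj_in[OF p]] by simp
      also have "G j y \<bullet> f (g (p z)) = T j (g (p y)) \<bullet> g (p z)"
        unfolding G_def by (rule isometry_inner[OF f(1) KK f(5) isproj_in[OF Tp[OF j]] gpK])
      also have "\<dots> = g (p y) \<bullet> T j (g (p z))" by (rule isproj_sa[OF Tp[OF j]])
      also have "\<dots> = f (g (p y)) \<bullet> G j z"
        unfolding G_def by (rule isometry_inner[OF f(1) KK f(5) gpK isproj_in[OF Tp[OF j]], symmetric])
      also have "f (g (p y)) = p y" using f(8)[OF isproj_in[OF p]] by simp
      also have "p y \<bullet> G j z = y \<bullet> p (G j z)" by (rule isproj_sa[OF p])
      also have "p (G j z) = G j z" by (rule pfix[OF Gin[OF j]])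
      finally show ?thesis .
    qed
    show ?thesis unfolding isproj_def using lin idem sa Gin[OF j] by blast
  qed
  have Gsum: "(\<Sum>j\<in>I. G j y) = c *\<^sub>R y" if y: "y \<in> V'" for y
  proof -
    have "(\<Sum>j\<in>I. G j y) = f (\<Sum>j\<in>I. T j (g y))" by (simp add: G_def pfix[OF y] linear_sum[OF f(1)])
    also have "\<dots> = f (c *\<^sub>R g y)" using famI_sum[OF T ginK[OF y]] by simp
    also have "\<dots> = c *\<^sub>R y" by (simp add: lin_scale[OF f(1)] f(8)[OF y])
    finally show ?thesis .
  qed
  have rkG: "rk (G j) = rk (T j)" if j: "j \<in> I" for j
  proof -
    have r: "range (G j) = f ` range (T j)"
    proof
      show "range (G j) \<subseteq> f ` range (T j)" unfolding G_def by blast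
      show "f ` range (T j) \<subseteq> range (G j)"
      proof
        fix y assume "y \<in> f ` range (T j)"
        then obtain x where y: "y = f (T j x)" by blast
        have TK: "T j x \<in> KK" by (rule isproj_in[OF Tp[OF j]])
        have "G j (f (T j x)) = f (T j (g (f (T j x))))" using pfix[OF finV[OF TK]] by (simp add: G_def)
        also have "\<dots> = y" using f(7)[OF TK] isproj_idem[OF Tp[OF j]] y by simp
        finally show "y \<in> range (G j)" by (metis rangeI)
      qed
    qed
    have sub: "span (range (T j)) = range (T j)"
      using isproj_subspace_range[OF Tp[OF j]] by (simp add: span_eq_iff)
    have inj: "inj_on f (span (range (T j)))"
    proof (rule inj_onI)
      fix u w assume "u \<in> span (range (T j))" "w \<in> span (range (T j))" "f u = f w"
      then have "u \<in> KK" "w \<in> KK" "f u = f w" using sub isproj_range_sub[OF Tp[OF j]] by auto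
      then show "u = w" using f(7) by metis
    qed
    have "rk (G j) = dim (f ` range (T j))" by (simp add: rk_def r)
    also have "\<dots> = dim (range (T j))" by (rule dim_image_eq[OF f(1) inj])
    finally show ?thesis by (simp add: rk_def)
  qed
  have "famI V' c I G" unfolding famI_def using V' fin Gproj Gsum by blast
  then show ?thesis using rkG by blast
qed

lemma isproj_zero: "subspace V \<Longrightarrow> isproj V (\<lambda>x. 0)"
  unfolding isproj_def by (simp add: subspace_0 linear_zero)

lemma rk_zero_iff: "linear f \<Longrightarrow> rk f = 0 \<longleftrightarrow> (\<forall>x. f x = 0)"
  unfolding rk_def using dim_eq_0 by (auto simp: image_subset_iff)

lemma functor_nat:
  fixes V :: "'a::euclidean_space set" and V' :: "'b::euclidean_space set" and F :: "nat \<Rightarrow> 'a \<Rightarrow> 'a"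
  assumes F: "famI V \<alpha> {..<K} F" and a1: "\<alpha> > 1" and Kc: "K \<le> CARD('k::finite)"
    and V': "subspace V'" and d: "real (dim V') = (\<alpha> - 1) * real (dim V)"
  shows "\<exists>G. famI V' (\<alpha>/(\<alpha>-1)) {..<K} G \<and> (\<forall>j<K. rk (G j) = rk (F j))"
proof -
  have V: "subspace V" using F by (rule famI_subspace)
  obtain \<iota> :: "nat \<Rightarrow> 'k" where inj: "inj_on \<iota> {..<K}"
    using card_le_inj[of "{..<K}" "UNIV :: 'k set"] Kc by auto
  define Fk where "Fk k = (if k \<in> \<iota> ` {..<K} then F (the_inv_into {..<K} \<iota> k) else (\<lambda>x. 0))" for k
  have Fk_iota: "Fk (\<iota> j) = F j" if "j < K" for j
    using that inj by (simp add: Fk_def the_inv_into_f_f)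
  have Fkp: "isproj V (Fk k)" for k
  proof (cases "k \<in> \<iota> ` {..<K}")
    case True
    then obtain j where j: "j < K" "k = \<iota> j" by blast
    then show ?thesis using Fk_iota[OF j(1)] famI_proj[OF F, of j] by simp
  next
    case False then show ?thesis by (simp add: Fk_def isproj_zero[OF V])
  qed
  have sumFk: "(\<Sum>k\<in>UNIV. g (Fk k)) = (\<Sum>j<K. g (F j))" if g0: "g (\<lambda>x. 0) = 0" for g :: "('a \<Rightarrow> 'a) \<Rightarrow> 'z::comm_monoid_add"
  proof -
    have "(\<Sum>k\<in>UNIV. g (Fk k)) = (\<Sum>k\<in>\<iota> ` {..<K}. g (Fk k))"
      by (rule sum.mono_neutral_right) (auto simp: Fk_def g0)
    also have "\<dots> = (\<Sum>j<K. g (Fk (\<iota> j)))" by (rule sum.reindex[OF inj, unfolded o_def])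
    also have "\<dots> = (\<Sum>j<K. g (F j))" by (rule sum.cong) (simp_all add: Fk_iota)
    finally show ?thesis .
  qed
  have famk: "famI V \<alpha> UNIV Fk"
    unfolding famI_def
  proof (intro conjI ballI)
    show "subspace V" by (rule V)
    show "finite (UNIV :: 'k set)" by simp
    show "isproj V (Fk k)" for k by (rule Fkp)
    fix x assume x: "x \<in> V"
    have "(\<Sum>k\<in>UNIV. Fk k x) = (\<Sum>j<K. F j x)"
      using sumFk[of "\<lambda>f. f x"] by simp
    then show "(\<Sum>k\<in>UNIV. Fk k x) = \<alpha> *\<^sub>R x" using famI_sum[OF F x] by simp
  qed
  obtain T :: "'k \<Rightarrow> 'a^'k \<Rightarrow> 'a^'k" and KK where T: "famI KK (\<alpha>/(\<alpha>-1)) UNIV T" "\<And>k. rk (T k) = rk (Fk k)"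
    using functor_core[OF famk a1] by blast
  have "(\<Sum>k\<in>UNIV. real (rk (T k))) = (\<alpha>/(\<alpha>-1)) * real (dim KK)" by (rule fam_trace[OF T(1)])
  moreover have "(\<Sum>k\<in>UNIV. real (rk (T k))) = \<alpha> * real (dim V)"
    using fam_trace[OF famk] T(2) by simp
  ultimately have "(\<alpha>/(\<alpha>-1)) * real (dim KK) = \<alpha> * real (dim V)" by simp
  then have "\<alpha> * real (dim KK) = \<alpha> * ((\<alpha> - 1) * real (dim V))" using a1 by (simp add: field_simps)
  then have "real (dim KK) = (\<alpha> - 1) * real (dim V)" using a1 by simp
  then have dKK: "dim V' = dim KK" using d by simp
  obtain G' where G': "famI V' (\<alpha>/(\<alpha>-1)) UNIV G'" "\<And>k. rk (G' k) = rk (T k)"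
    using transport[OF T(1) V' dKK] by blast
  define G where "G j = G' (\<iota> j)" for j
  have G'0: "G' k x = 0" if "k \<notin> \<iota> ` {..<K}" for k x
  proof -
    have "rk (G' k) = 0" using that G'(2) T(2) by (simp add: Fk_def rk_def)
    then show ?thesis using rk_zero_iff[OF isproj_linear[OF famI_proj[OF G'(1)]]] by blast
  qed
  have "famI V' (\<alpha>/(\<alpha>-1)) {..<K} G"
    unfolding famI_def
  proof (intro conjI ballI)
    show "subspace V'" by (rule V')
    show "finite {..<K}" by simp
    show "isproj V' (G j)" for j unfolding G_def by (rule famI_proj[OF G'(1)]) simp
    fix y assume y: "y \<in> V'"
    have "(\<Sum>j<K. G j y) = (\<Sum>k\<in>\<iota> ` {..<K}. G' k y)"
      unfolding G_def by (rule sum.reindex[OF inj, unfolded o_def, symmetric])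
    also have "\<dots> = (\<Sum>k\<in>UNIV. G' k y)"
      by (rule sum.mono_neutral_left) (auto simp: G'0)
    also have "\<dots> = (\<alpha>/(\<alpha>-1)) *\<^sub>R y" using famI_sum[OF G'(1) y] .
    finally show "(\<Sum>j<K. G j y) = (\<alpha>/(\<alpha>-1)) *\<^sub>R y" .
  qed
  moreover have "rk (G j) = rk (F j)" if "j < K" for j
    using G'(2) T(2) Fk_iota[OF that] by (simp add: G_def)
  ultimately show ?thesis by blast
qed



lemma inner_mv: fixes A :: "real^'n^'n" shows "(A *v x) \<bullet> y = x \<bullet> (transpose A *v y)"
  by (simp add: inner_vec_def matrix_vector_mult_def transpose_def sum_distrib_left sum_distrib_right
      mult.commute mult.left_commute) (rule sum.swap)

lemma sum_mv: fixes P :: "nat \<Rightarrow> real^'n^'n" shows "(\<Sum>i\<in>I. P i) *v x = (\<Sum>i\<in>I. P i *v x)"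
  by (induction I rule: infinite_finite_induct) (auto simp: matrix_vector_mult_add_rdistrib)

lemma lin_vs: fixes f :: "real^'n \<Rightarrow> real^'n" shows "linear f \<Longrightarrow> Vector_Spaces.linear (*s) (*s) f"
  by (simp add: linear_def scalar_mult_eq_scaleR)

lemma TFF_iff:
  "L \<in> TFF \<alpha> TYPE('n::finite) \<longleftrightarrow> sorted_wrt (\<ge>) L \<and> (\<forall>x\<in>set L. 0 < x) \<and>
     (\<exists>F :: nat \<Rightarrow> real^'n \<Rightarrow> real^'n. famI UNIV \<alpha> {..<length L} F \<and> (\<forall>i<length L. rk (F i) = L ! i))"
proof
  assume "L \<in> TFF \<alpha> TYPE('n)"
  then obtain P :: "nat \<Rightarrow> real^'n^'n" where s: "sorted_wrt (\<ge>) L" "\<forall>x\<in>set L. 0 < x"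
    and P: "\<forall>i<length L. orth_proj (P i) \<and> rank (P i) = L ! i" "(\<Sum>i<length L. P i) = \<alpha> *\<^sub>R mat 1"
    unfolding TFF_def by blast
  define F where "F i x = P i *v x" for i x
  have "famI UNIV \<alpha> {..<length L} F"
    unfolding famI_def
  proof (intro conjI ballI)
    show "subspace (UNIV :: (real^'n) set)" by simp
    show "finite {..<length L}" by simp
    fix i assume "i \<in> {..<length L}"
    then have o: "P i ** P i = P i" "transpose (P i) = P i" using P(1) by (auto simp: orth_proj_def)
    show "isproj UNIV (F i)" unfolding isproj_def F_def
      using o by (simp add: matrix_vector_mul_assoc inner_mv)
  next
    fix x :: "real^'n"
    have "(\<Sum>i<length L. F i x) = (\<Sum>i<length L. P i) *v x" by (simp add: F_def sum_mv)
    also have "\<dots> = \<alpha> *\<^sub>R x" using P(2) by (simp add: scaleR_matrix_vector_assoc[symmetric])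
    finally show "(\<Sum>i<length L. F i x) = \<alpha> *\<^sub>R x" .
  qed
  moreover have "\<forall>i<length L. rk (F i) = L ! i"
    using P(1) by (simp add: rk_def F_def rank_dim_range[symmetric])
  ultimately show "sorted_wrt (\<ge>) L \<and> (\<forall>x\<in>set L. 0 < x) \<and>
     (\<exists>F :: nat \<Rightarrow> real^'n \<Rightarrow> real^'n. famI UNIV \<alpha> {..<length L} F \<and> (\<forall>i<length L. rk (F i) = L ! i))"
    using s by blast
next
  assume "sorted_wrt (\<ge>) L \<and> (\<forall>x\<in>set L. 0 < x) \<and>
     (\<exists>F :: nat \<Rightarrow> real^'n \<Rightarrow> real^'n. famI UNIV \<alpha> {..<length L} F \<and> (\<forall>i<length L. rk (F i) = L ! i))"
  then obtain F :: "nat \<Rightarrow> real^'n \<Rightarrow> real^'n" where s: "sorted_wrt (\<ge>) L" "\<forall>x\<in>set L. 0 < x"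
    and F: "famI UNIV \<alpha> {..<length L} F" "\<forall>i<length L. rk (F i) = L ! i" by blast
  define P where "P i = matrix (F i)" for i
  have Fp: "isproj UNIV (F i)" if "i < length L" for i using that by (intro famI_proj[OF F(1)]) simp
  have PF: "P i *v x = F i x" if "i < length L" for i x
    unfolding P_def by (rule matrix_works[OF lin_vs[OF isproj_linear[OF Fp[OF that]]]])
  have "orth_proj (P i) \<and> rank (P i) = L ! i" if i: "i < length L" for i
  proof (intro conjI)
    show "orth_proj (P i)" unfolding orth_proj_def
    proof
      show "P i ** P i = P i"
        by (simp add: matrix_eq matrix_vector_mul_assoc[symmetric] PF[OF i] isproj_idem[OF Fp[OF i]])
      show "transpose (P i) = P i"
      proof (subst matrix_eq, rule allI)
        fix x :: "real^'n"
        show "transpose (P i) *v x = P i *v x"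
        proof (rule eq_by_inner)
          fix y
          have "(transpose (P i) *v x) \<bullet> y = x \<bullet> (P i *v y)"
            using inner_mv[of "transpose (P i)" x y] by simp
          also have "\<dots> = (P i *v x) \<bullet> y" by (simp add: PF[OF i] isproj_sa[OF Fp[OF i]])
          finally show "(transpose (P i) *v x) \<bullet> y = (P i *v x) \<bullet> y" .
        qed
      qed
    qed
    have "range ((*v) (P i)) = range (F i)" using PF[OF i] by (metis ext)
    then show "rank (P i) = L ! i" using F(2) i by (simp add: rank_dim_range rk_def)
  qed
  moreover have "(\<Sum>i<length L. P i) = \<alpha> *\<^sub>R mat 1"
  proof (subst matrix_eq, rule allI)
    fix x :: "real^'n"
    have "(\<Sum>i<length L. P i) *v x = (\<Sum>i<length L. F i x)" by (simp add: sum_mv PF)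
    also have "\<dots> = \<alpha> *\<^sub>R x" by (rule famI_sum[OF F(1)]) simp
    finally show "(\<Sum>i<length L. P i) *v x = (\<alpha> *\<^sub>R mat 1) *v x"
      by (simp add: scaleR_matrix_vector_assoc[symmetric])
  qed
  ultimately show "L \<in> TFF \<alpha> TYPE('n)" unfolding TFF_def using s by blast
qed

lemma maj_len:
  assumes AB: "majorized A B" and BA: "majorized B A" and pos: "\<forall>x\<in>set A. 0 < x"
  shows "length A \<le> length B"
proof (rule ccontr)
  assume "\<not> length A \<le> length B"
  then have lt: "length B < length A" by simp
  have "sum_list (take (length B) A) = sum_list (take (length B) B)"
    using AB BA lt unfolding majorized_def by (metis le_antisym min.strict_order_iff min_def order_refl)
  also have "\<dots> = sum_list B" by simp
  also have "\<dots> = sum_list A" using AB unfolding majorized_def by simp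
  also have "\<dots> = sum_list (take (length B) A) + sum_list (drop (length B) A)"
    by (metis append_take_drop_id sum_list_append)
  finally have "sum_list (drop (length B) A) = 0" by simp
  moreover have "drop (length B) A \<noteq> []" using lt by simp
  moreover have "\<forall>x\<in>set (drop (length B) A). 0 < x" using pos by (meson in_set_dropD)
  ultimately show False by (metis neq_Nil_conv list.set_intros(1) sum_list_eq_0_iff not_less0 less_numeral_extra(3))
qed

lemma majorized_antisym:
  assumes AB: "majorized A B" and BA: "majorized B A" and pA: "\<forall>x\<in>set A. 0 < x" and pB: "\<forall>x\<in>set B. 0 < x"
  shows "A = B"
proof -
  have len: "length A = length B" using maj_len[OF AB BA pA] maj_len[OF BA AB pB] by simp
  have eq: "sum_list (take k A) = sum_list (take k B)" if "k \<le> length A" for k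
    using AB BA that len unfolding majorized_def by (metis le_antisym min.idem)
  show ?thesis
  proof (rule nth_equalityI[OF len])
    fix i assume i: "i < length A"
    have "sum_list (take (Suc i) A) = sum_list (take i A) + A ! i" using i by (simp add: take_Suc_conv_app_nth)
    moreover have "sum_list (take (Suc i) B) = sum_list (take i B) + B ! i" using i len by (simp add: take_Suc_conv_app_nth)
    ultimately show "A ! i = B ! i" using eq[of i] eq[of "Suc i"] i by simp
  qed
qed

lemma unique_max:
  assumes L0: "L0 \<in> S" and mj: "\<And>L. L \<in> S \<Longrightarrow> majorized L L0" and pos: "\<And>L. L \<in> S \<Longrightarrow> \<forall>x\<in>set L. 0 < x"
  shows "maximal_elems S = {L0}"
proof
  show "maximal_elems S \<subseteq> {L0}"
  proof
    fix L assume "L \<in> maximal_elems S"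
    then have "L \<in> S" "\<forall>L'\<in>S. majorized L L' \<longrightarrow> L' = L" unfolding maximal_elems_def by auto
    then show "L \<in> {L0}" using mj L0 by force
  qed
  show "{L0} \<subseteq> maximal_elems S"
    unfolding maximal_elems_def using L0 mj pos majorized_antisym by blast
qed

lemma TFF_pos: "L \<in> TFF \<alpha> TYPE('n::finite) \<Longrightarrow> \<forall>x\<in>set L. 0 < x"
  unfolding TFF_def by blast

lemma prefix_sum: "k \<le> length L \<Longrightarrow> sum_list (take k L) = (\<Sum>j<k. L ! j)"
  by (simp add: sum_list_sum_nth min_def atLeast0LessThan)

lemma take_rep3: "sum_list (take k (replicate a (x::nat) @ replicate 3 y)) = min k a * x + min (k - a) 3 * y"
  by (simp add: sum_list_replicate)

lemma B_each: assumes F: "famI V \<alpha> I F" and j: "j \<in> I" shows "rk (F j) \<le> dim V"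
  unfolding rk_def by (rule dim_subset[OF isproj_range_sub[OF famI_proj[OF F j]]])

lemma B_one: assumes F: "famI V \<alpha> I F" and j: "j \<in> I" and a: "\<alpha> > 1"
  shows "real (rk (F j)) \<le> (\<alpha> - 1) * real (dim V)"
  using G1[OF F, of "{j}"] j a by simp

lemma sum_rk_le_card:
  assumes F: "famI V \<alpha> I F" and S: "S \<subseteq> I"
  shows "real (\<Sum>j\<in>S. rk (F j)) \<le> real (card S) * real (dim V)"
proof -
  have "(\<Sum>j\<in>S. rk (F j)) \<le> (\<Sum>j\<in>S. dim V)"
  proof (rule sum_mono)
    fix j assume "j \<in> S"
    then show "rk (F j) \<le> dim V" by (rule B_each[OF F subsetD[OF S]])
  qed
  then have "(\<Sum>j\<in>S. rk (F j)) \<le> card S * dim V" by simp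
  then have "real (\<Sum>j\<in>S. rk (F j)) \<le> real (card S * dim V)" by (rule of_nat_mono)
  then show ?thesis by simp
qed

lemma sum_rk_le_total:
  fixes F :: "nat \<Rightarrow> 'a::euclidean_space \<Rightarrow> 'a"
  assumes F: "famI V \<alpha> {..<K} F" and k: "k \<le> K"
  shows "real (\<Sum>j<k. rk (F j)) \<le> \<alpha> * real (dim V)"
proof -
  have "(\<Sum>j<k. rk (F j)) \<le> (\<Sum>j<K. rk (F j))" using k by (intro sum_mono2) (auto simp: finite_lessThan)
  then have "real (\<Sum>j<k. rk (F j)) \<le> (\<Sum>j<K. real (rk (F j)))" by (metis of_nat_le_iff of_nat_sum)
  also have "\<dots> = \<alpha> * real (dim V)" by (rule fam_trace[OF F])
  finally show ?thesis .
qed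

lemma B_c3:
  fixes F :: "nat \<Rightarrow> 'a::euclidean_space \<Rightarrow> 'a"
  assumes F: "famI V (real n + 1/2) {..<K} F" and dV: "dim V = 2 * h" and n: "n \<ge> 1" and k: "k \<le> K"
  shows "(\<Sum>j<k. rk (F j)) \<le> sum_list (take k (replicate (n - 1) (2 * h) @ replicate 3 h))"
proof -
  have R: "sum_list (take k (replicate (n - 1) (2 * h) @ replicate 3 h))
      = min k (n - 1) * (2 * h) + min (k - (n - 1)) 3 * h" by (simp only: take_rep3)
  have rn: "real (n - 1) = real n - 1" using n by (simp add: of_nat_diff)
  have sub: "{..<k} \<subseteq> {..<K}" using k by auto
  consider "k \<le> n - 1" | "k = n" | "k = n + 1" | "k \<ge> n + 2" using n by linarith
  then show ?thesis
  proof cases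
    case 1
    have "real (\<Sum>j<k. rk (F j)) \<le> real k * real (2 * h)" using sum_rk_le_card[OF F sub] dV by simp
    moreover have "min k (n - 1) = k" "min (k - (n - 1)) 3 = 0" using 1 by auto
    ultimately have "real (\<Sum>j<k. rk (F j)) \<le> real (min k (n - 1) * (2 * h) + min (k - (n - 1)) 3 * h)" by simp
    then show ?thesis using R by (simp only: of_nat_le_iff)
  next
    case 2
    have g: "real (\<Sum>j<k. rk (F j)) \<le> (real n + 1/2 - 1) * real (dim V)"
      by (rule G1[OF F sub]) (use 2 in simp)
    have m: "min k (n - 1) = n - 1" "min (k - (n - 1)) 3 = 1" using 2 n by auto
    have e: "real (min k (n - 1) * (2 * h) + min (k - (n - 1)) 3 * h)
          = real (min k (n - 1)) * (2 * real h) + real (min (k - (n - 1)) 3) * real h"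
      by (simp only: of_nat_add of_nat_mult of_nat_numeral)
    have "real (\<Sum>j<k. rk (F j)) \<le> real (min k (n - 1) * (2 * h) + min (k - (n - 1)) 3 * h)"
      unfolding e unfolding m unfolding rn using g dV by (simp add: algebra_simps)
    then show ?thesis using R by (simp only: of_nat_le_iff)
  next
    case 3
    have g: "real (\<Sum>j<k. rk (F j)) \<le> (real (card {..<k}) - 1) * real (dim V)"
      by (rule G2[OF F sub]) (use 3 in simp)
    have m: "min k (n - 1) = n - 1" "min (k - (n - 1)) 3 = 2" using 3 n by auto
    have e: "real (min k (n - 1) * (2 * h) + min (k - (n - 1)) 3 * h)
          = real (min k (n - 1)) * (2 * real h) + real (min (k - (n - 1)) 3) * real h"
      by (simp only: of_nat_add of_nat_mult of_nat_numeral)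
    have "real (\<Sum>j<k. rk (F j)) \<le> real (min k (n - 1) * (2 * h) + min (k - (n - 1)) 3 * h)"
      unfolding e unfolding m unfolding rn using g dV 3 by (simp add: algebra_simps)
    then show ?thesis using R by (simp only: of_nat_le_iff)
  next
    case 4
    have g: "real (\<Sum>j<k. rk (F j)) \<le> (real n + 1/2) * real (dim V)" by (rule sum_rk_le_total[OF F k])
    have m: "min k (n - 1) = n - 1" "min (k - (n - 1)) 3 = 3" using 4 n by auto
    have e: "real (min k (n - 1) * (2 * h) + min (k - (n - 1)) 3 * h)
          = real (min k (n - 1)) * (2 * real h) + real (min (k - (n - 1)) 3) * real h"
      by (simp only: of_nat_add of_nat_mult of_nat_numeral)
    have "real (\<Sum>j<k. rk (F j)) \<le> real (min k (n - 1) * (2 * h) + min (k - (n - 1)) 3 * h)"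
      unfolding e unfolding m unfolding rn using g dV by (simp add: algebra_simps)
    then show ?thesis using R by (simp only: of_nat_le_iff)
  qed
qed

lemma fam_copies:
  assumes V: "subspace V" and p: "isproj V p" and pfix: "\<And>x. x \<in> V \<Longrightarrow> p x = x"
  shows "famI V (real K) {..<K} (\<lambda>_. p)"
  unfolding famI_def using V p pfix by (simp add: sum_constant_scaleR)

lemma rk_proj_fix:
  assumes p: "isproj V p" and pfix: "\<And>x. x \<in> V \<Longrightarrow> p x = x"
  shows "rk p = dim V"
proof -
  have "range p = V"
  proof
    show "range p \<subseteq> V" by (rule isproj_range_sub[OF p])
    show "V \<subseteq> range p" using pfix by (metis rangeI subsetI)
  qed
  then show ?thesis by (simp add: rk_def)
qed

lemma fam_union:
  fixes F G :: "nat \<Rightarrow> 'a::euclidean_space \<Rightarrow> 'a"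
  assumes F: "famI V a {..<K1} F" and G: "famI V b {..<K2} G"
  shows "famI V (a + b) {..<K1 + K2} (\<lambda>j. if j < K1 then F j else G (j - K1))"
proof -
  define H where "H j = (if j < K1 then F j else G (j - K1))" for j
  have split: "(\<Sum>j<K1 + m. H j x) = (\<Sum>j<K1. F j x) + (\<Sum>j<m. G j x)" for m x
    by (induction m) (simp_all add: H_def)
  show ?thesis unfolding H_def[symmetric] famI_def
  proof (intro conjI ballI)
    show "subspace V" by (rule famI_subspace[OF F])
    show "finite {..<K1 + K2}" by simp
    fix j assume "j \<in> {..<K1 + K2}"
    then show "isproj V (H j)"
      by (cases "j < K1") (auto simp: H_def intro!: famI_proj[OF F] famI_proj[OF G])
  next
    fix x assume x: "x \<in> V"
    show "(\<Sum>j<K1 + K2. H j x) = (a + b) *\<^sub>R x"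
      using split famI_sum[OF F x] famI_sum[OF G x] by (simp add: scaleR_add_left)
  qed
qed

lemma dim_le_card_n: fixes V :: "(real^'n::finite) set" shows "dim V \<le> CARD('n)"
  using dim_subset[of V UNIV] by simp

lemma ex_sub: fixes k :: nat assumes "k \<le> CARD('n::finite)"
  obtains W :: "(real^'n) set" where "subspace W" "dim W = k"
  using choose_subspace_of_subspace[of k "UNIV :: (real^'n) set"] assms by auto

lemma ex_c2:
  fixes V :: "(real^'n::finite) set"
  assumes V: "subspace V" and dV: "dim V = n * m" and n: "n \<ge> 1" and m: "m \<ge> 1"
  shows "\<exists>F. famI V (1 + 1 / real n) {..<n+1} F \<and> (\<forall>j<n+1. rk (F j) = m)"
proof -
  have mle: "m \<le> CARD('n)" using dim_le_card_n[of V] dV n by (metis le_trans mult_le_mono1 mult_1 nat_mult_le_cancel_disj)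
  obtain W :: "(real^'n) set" where W: "subspace W" "dim W = m" using ex_sub[OF mle] by blast
  obtain p where p: "isproj W p" and pfix: "\<And>x. x \<in> W \<Longrightarrow> p x = x" using proj_exists[OF W(1)] by blast
  have fam: "famI W (real (n+1)) {..<n+1} (\<lambda>_. p)" by (rule fam_copies[OF W(1) p pfix])
  have K: "n + 1 \<le> CARD('n \<times> bool)"
  proof -
    have "n \<le> n * m" using m by simp
    also have "\<dots> \<le> CARD('n)" using dim_le_card_n[of V] dV by simp
    finally show ?thesis using n by simp
  qed
  have d: "real (dim V) = (real (n+1) - 1) * real (dim W)" using dV W(2) by simp
  obtain G where G: "famI V (real (n+1) / (real (n+1) - 1)) {..<n+1} G" "\<forall>j<n+1. rk (G j) = rk p"
    using functor_nat[where 'k = "'n \<times> bool", OF fam _ K V d] n by auto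
  have a: "real (n+1) / (real (n+1) - 1) = 1 + 1 / real n" using n by (simp add: field_simps)
  have "rk p = m" using rk_proj_fix[OF p pfix] W(2) by simp
  then show ?thesis using G a by auto
qed

lemma nth_rep3: "j < a + 3 \<Longrightarrow> (replicate a x @ replicate 3 y) ! j = (if j < a then x else y)"
  by (simp add: nth_append)

lemma ex_c3:
  fixes V :: "(real^'n::finite) set"
  assumes V: "subspace V" and dV: "dim V = 2 * h" and n: "n \<ge> 1" and h: "h \<ge> 1"
  shows "\<exists>F. famI V (real n + 1/2) {..<n+2} F \<and>
     (\<forall>j<n+2. rk (F j) = (replicate (n - 1) (2 * h) @ replicate 3 h) ! j)"
proof -
  obtain p where p: "isproj V p" and pfix: "\<And>x. x \<in> V \<Longrightarrow> p x = x" using proj_exists[OF V] by blast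
  have F1: "famI V (real (n - 1)) {..<n-1} (\<lambda>_. p)" by (rule fam_copies[OF V p pfix])
  obtain G :: "nat \<Rightarrow> real^'n \<Rightarrow> real^'n" where G: "famI V (1 + 1 / real 2) {..<2+1} G" "\<forall>j<2+1. rk (G j) = h"
    using ex_c2[OF V, of 2 h] dV h by auto
  define H where "H j = (if j < n - 1 then p else G (j - (n - 1)))" for j
  have fam: "famI V (real (n - 1) + (1 + 1 / real 2)) {..<n - 1 + (2+1)} H"
    unfolding H_def by (rule fam_union[OF F1 G(1)])
  have e1: "real (n - 1) + (1 + 1 / real 2) = real n + 1/2" using n by (simp add: of_nat_diff)
  have e2: "n - 1 + (2+1) = n + 2" using n by simp
  have "rk (H j) = (replicate (n - 1) (2 * h) @ replicate 3 h) ! j" if "j < n + 2" for j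
  proof -
    have "j < n - 1 + 3" using that n by simp
    then show ?thesis using G(2) rk_proj_fix[OF p pfix] dV that n by (auto simp: H_def nth_rep3)
  qed
  moreover have "famI V (real n + 1/2) {..<n+2} H" using fam unfolding e1 e2 .
  ultimately show ?thesis by blast
qed

lemma ex_c4:
  assumes n: "n \<ge> 2" and m: "m \<ge> 1" and N: "CARD('n::finite) = (2 * n - 1) * m"
  shows "\<exists>F :: nat \<Rightarrow> real^'n \<Rightarrow> real^'n. famI UNIV (1 + 2 / (2 * real n - 1)) {..<n+2} F \<and>
     (\<forall>j<n+2. rk (F j) = (replicate (n - 1) (2 * m) @ replicate 3 m) ! j)"
proof -
  have "2 \<le> 2 * n - 1" using n by simp
  then have le: "2 * m \<le> CARD('n)" using N by (simp add: mult_le_mono1)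
  obtain W :: "(real^'n) set" where W: "subspace W" "dim W = 2 * m" using ex_sub[OF le] by blast
  obtain F where F: "famI W (real n + 1/2) {..<n+2} F"
      "\<forall>j<n+2. rk (F j) = (replicate (n - 1) (2 * m) @ replicate 3 m) ! j"
    using ex_c3[OF W(1) W(2), of n] n m by auto
  have K: "n + 2 \<le> CARD('n \<times> bool)"
  proof -
    have "n + 2 \<le> 2 * ((2 * n - 1) * 1)" using n by simp
    also have "\<dots> \<le> 2 * ((2 * n - 1) * m)" using m by (intro mult_le_mono2) simp
    finally show ?thesis using N by simp
  qed
  have rn: "real (2 * n - 1) = 2 * real n - 1" using n by (simp add: of_nat_diff)
  have cN: "real CARD('n) = (2 * real n - 1) * real m" by (simp only: N of_nat_mult rn)
  have d1: "real (dim (UNIV :: (real^'n) set)) = (2 * real n - 1) * real m" using cN by simp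
  have d2: "(real n + 1/2 - 1) * real (dim W) = (2 * real n - 1) * real m" using W(2) by (simp add: algebra_simps)
  have d: "real (dim (UNIV :: (real^'n) set)) = (real n + 1/2 - 1) * real (dim W)"
    using d1 d2 by simp
  have a1: "real n + 1/2 > 1" using n by simp
  obtain G :: "nat \<Rightarrow> real^'n \<Rightarrow> real^'n" where G: "famI UNIV ((real n + 1/2) / (real n + 1/2 - 1)) {..<n+2} G"
      "\<forall>j<n+2. rk (G j) = rk (F j)"
    using functor_nat[where 'k = "'n \<times> bool", OF F(1) a1 K subspace_UNIV d] by blast
  have a: "(real n + 1/2) / (real n + 1/2 - 1) = 1 + 2 / (2 * real n - 1)" using n by (simp add: field_simps)
  show ?thesis using G F(2) a by auto
qed

lemma maj_lemma:
  assumes L: "L \<in> TFF \<alpha> TYPE('n::finite)"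
   and bnd: "\<And>F :: nat \<Rightarrow> real^'n \<Rightarrow> real^'n. famI UNIV \<alpha> {..<length L} F \<Longrightarrow> (\<forall>i<length L. rk (F i) = L ! i) \<Longrightarrow>
        \<forall>k \<le> min (length L) (length L0). (\<Sum>j<k. rk (F j)) \<le> sum_list (take k L0)"
   and tot: "real (sum_list L0) = \<alpha> * real CARD('n)"
  shows "majorized L L0"
proof -
  obtain F :: "nat \<Rightarrow> real^'n \<Rightarrow> real^'n" where F: "famI UNIV \<alpha> {..<length L} F" "\<forall>i<length L. rk (F i) = L ! i"
    using L unfolding TFF_iff by blast
  have pre: "sum_list (take k L) = (\<Sum>j<k. rk (F j))" if "k \<le> length L" for k
    using that F(2) by (simp add: prefix_sum)
  have "real (sum_list L) = (\<Sum>j<length L. real (rk (F j)))" using pre[of "length L"] by simp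
  also have "\<dots> = \<alpha> * real CARD('n)" using fam_trace[OF F(1)] by simp
  finally have "sum_list L = sum_list L0" using tot by simp
  moreover have "\<forall>k\<le>min (length L) (length L0). sum_list (take k L) \<le> sum_list (take k L0)"
    using bnd[OF F] pre by simp
  ultimately show ?thesis unfolding majorized_def by blast
qed

lemma TFF_intro:
  fixes F :: "nat \<Rightarrow> real^'n::finite \<Rightarrow> real^'n"
  assumes "sorted_wrt (\<ge>) L" "\<forall>x\<in>set L. 0 < x" "famI UNIV \<alpha> {..<length L} F" "\<forall>i<length L. rk (F i) = L ! i"
  shows "L \<in> TFF \<alpha> TYPE('n)"
  unfolding TFF_iff using assms by blast

lemma take_rep: "k \<le> n \<Longrightarrow> sum_list (take k (replicate n (x::nat))) = k * x"
  by (simp add: sum_list_replicate min_def)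

lemma case1:
  fixes n :: nat
  shows "maximal_elems (TFF (real n) TYPE('n::finite)) = {replicate n CARD('n)}"
proof (rule unique_max)
  let ?L0 = "replicate n CARD('n)"
  have idp: "isproj UNIV (\<lambda>x::real^'n. x)" unfolding isproj_def by (simp add: linear_id[unfolded id_def])
  have fam: "famI UNIV (real n) {..<n} (\<lambda>_ (x::real^'n). x)" by (rule fam_copies[OF subspace_UNIV idp]) simp
  have rkid: "rk (\<lambda>x::real^'n. x) = CARD('n)" using rk_proj_fix[OF idp] by simp
  show "?L0 \<in> TFF (real n) TYPE('n)"
    by (rule TFF_intro[OF _ _ _ _]) (use fam rkid in \<open>auto simp: sorted_wrt_iff_nth_less\<close>)
  fix L assume L: "L \<in> TFF (real n) TYPE('n)"
  then show "\<forall>x\<in>set L. 0 < x" by (rule TFF_pos)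
  show "majorized L ?L0"
  proof (rule maj_lemma[OF L])
    show "real (sum_list ?L0) = real n * real CARD('n)" by (simp add: sum_list_replicate)
    fix F :: "nat \<Rightarrow> real^'n \<Rightarrow> real^'n" assume F: "famI UNIV (real n) {..<length L} F"
    show "\<forall>k\<le>min (length L) (length ?L0). (\<Sum>j<k. rk (F j)) \<le> sum_list (take k ?L0)"
    proof (intro allI impI)
      fix k assume k: "k \<le> min (length L) (length ?L0)"
      have "real (\<Sum>j<k. rk (F j)) \<le> real (card {..<k}) * real (dim (UNIV :: (real^'n) set))"
        by (rule sum_rk_le_card[OF F]) (use k in auto)
      then have "real (\<Sum>j<k. rk (F j)) \<le> real k * real CARD('n)" by simp
      then have "real (\<Sum>j<k. rk (F j)) \<le> real (k * CARD('n))" by (simp only: of_nat_mult)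
      then have "(\<Sum>j<k. rk (F j)) \<le> k * CARD('n)" by (simp only: of_nat_le_iff)
      then show "(\<Sum>j<k. rk (F j)) \<le> sum_list (take k ?L0)" using k by (simp add: sum_list_replicate)
    qed
  qed
qed

lemma sorted_rep: "sorted_wrt (\<ge>) (replicate n (x::nat))"
  by (simp add: sorted_wrt_iff_nth_less)

lemma sorted_rep3: "y \<le> x \<Longrightarrow> sorted_wrt (\<ge>) (replicate a (x::nat) @ replicate 3 y)"
  by (auto simp: sorted_wrt_append sorted_rep)

lemma case2:
  fixes n :: nat
  assumes d: "n dvd CARD('n::finite)"
  shows "maximal_elems (TFF (1 + 1 / real n) TYPE('n)) = {replicate (n + 1) (CARD('n) div n)}"
proof -
  obtain m where m: "CARD('n) = n * m" using d by blast
  have n1: "n \<ge> 1" using m by (metis One_nat_def less_one mult_is_0 not_le zero_less_card_finite less_irrefl)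
  have m1: "m \<ge> 1" using m by (metis One_nat_def less_one mult_is_0 not_le zero_less_card_finite less_irrefl)
  have md: "CARD('n) div n = m" using m n1 by simp
  have dU: "dim (UNIV :: (real^'n) set) = n * m" using m by simp
  show ?thesis unfolding md
  proof (rule unique_max)
    let ?L0 = "replicate (n + 1) m"
    obtain F :: "nat \<Rightarrow> real^'n \<Rightarrow> real^'n" where F: "famI UNIV (1 + 1 / real n) {..<n+1} F" "\<forall>j<n+1. rk (F j) = m"
      using ex_c2[OF subspace_UNIV dU n1 m1] by blast
    have r: "\<forall>i<length ?L0. rk (F i) = ?L0 ! i" by (metis F(2) length_replicate nth_replicate)
    have fl: "famI UNIV (1 + 1 / real n) {..<length ?L0} F" using F(1) by (simp only: length_replicate)
    have p: "\<forall>x\<in>set ?L0. 0 < x" using m1 by simp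
    show "?L0 \<in> TFF (1 + 1 / real n) TYPE('n)"
      by (rule TFF_intro[OF sorted_rep p fl r])
    fix L assume L: "L \<in> TFF (1 + 1 / real n) TYPE('n)"
    then show "\<forall>x\<in>set L. 0 < x" by (rule TFF_pos)
    show "majorized L ?L0"
    proof (rule maj_lemma[OF L])
      show "real (sum_list ?L0) = (1 + 1 / real n) * real CARD('n)"
        using m n1 by (simp add: sum_list_replicate field_simps)
      fix F :: "nat \<Rightarrow> real^'n \<Rightarrow> real^'n" assume F: "famI UNIV (1 + 1 / real n) {..<length L} F"
      show "\<forall>k\<le>min (length L) (length ?L0). (\<Sum>j<k. rk (F j)) \<le> sum_list (take k ?L0)"
      proof (intro allI impI)
        fix k assume k: "k \<le> min (length L) (length ?L0)"
        have each: "rk (F j) \<le> m" if "j < k" for j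
        proof -
          have "real (rk (F j)) \<le> (1 + 1 / real n - 1) * real (dim (UNIV :: (real^'n) set))"
            by (rule B_one[OF F]) (use that k n1 in auto)
          also have "\<dots> = real m" using dU n1 by simp
          finally show ?thesis by simp
        qed
        have "(\<Sum>j<k. rk (F j)) \<le> (\<Sum>j<k. m)" by (rule sum_mono) (use each in auto)
        moreover have "sum_list (take k ?L0) = k * m" by (rule take_rep) (use k in simp)
        ultimately show "(\<Sum>j<k. rk (F j)) \<le> sum_list (take k ?L0)" by simp
      qed
    qed
  qed
qed

lemma case3:
  fixes n :: nat
  assumes n1: "1 \<le> n" and d: "2 dvd CARD('n::finite)"
  shows "maximal_elems (TFF (real n + 1 / 2) TYPE('n))
           = {replicate (n - 1) CARD('n) @ replicate 3 (CARD('n) div 2)}"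
proof -
  obtain h where h: "CARD('n) = 2 * h" using d by blast
  have h1: "h \<ge> 1" using h by (metis One_nat_def less_one mult_is_0 not_le zero_less_card_finite less_irrefl)
  have hd: "CARD('n) div 2 = h" using h by simp
  have dU: "dim (UNIV :: (real^'n) set) = 2 * h" using h by simp
  show ?thesis unfolding hd unfolding h
  proof (rule unique_max)
    let ?L0 = "replicate (n - 1) (2 * h) @ replicate 3 h"
    obtain F :: "nat \<Rightarrow> real^'n \<Rightarrow> real^'n" where F: "famI UNIV (real n + 1/2) {..<n+2} F"
        "\<forall>j<n+2. rk (F j) = ?L0 ! j"
      using ex_c3[OF subspace_UNIV dU n1 h1] by blast
    have len: "length ?L0 = n + 2" using n1 by simp
    have r: "\<forall>i<length ?L0. rk (F i) = ?L0 ! i" using F(2) len by simp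
    have fl: "famI UNIV (real n + 1 / 2) {..<length ?L0} F" using F(1) len by simp
    have p: "\<forall>x\<in>set ?L0. 0 < x" using h1 by simp
    have so: "sorted_wrt (\<ge>) ?L0" by (rule sorted_rep3) simp
    show "?L0 \<in> TFF (real n + 1 / 2) TYPE('n)"
      by (rule TFF_intro[OF so p fl r])
    fix L assume L: "L \<in> TFF (real n + 1 / 2) TYPE('n)"
    then show "\<forall>x\<in>set L. 0 < x" by (rule TFF_pos)
    show "majorized L ?L0"
    proof (rule maj_lemma[OF L])
      have s0: "sum_list ?L0 = (n - 1) * (2 * h) + 3 * h" by (simp add: sum_list_replicate)
      have rn: "real (n - 1) = real n - 1" using n1 by (simp add: of_nat_diff)
      have "real (sum_list ?L0) = real (n - 1) * (2 * real h) + 3 * real h"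
        unfolding s0 by (simp only: of_nat_add of_nat_mult of_nat_numeral)
      also have "\<dots> = (real n + 1 / 2) * real (2 * h)" unfolding rn by (simp add: algebra_simps)
      finally have X: "real (sum_list ?L0) = (real n + 1 / 2) * real (2 * h)" .
      show "real (sum_list ?L0) = (real n + 1 / 2) * real CARD('n)" unfolding h by (rule X)
      fix F :: "nat \<Rightarrow> real^'n \<Rightarrow> real^'n" assume F: "famI UNIV (real n + 1 / 2) {..<length L} F"
      show "\<forall>k\<le>min (length L) (length ?L0). (\<Sum>j<k. rk (F j)) \<le> sum_list (take k ?L0)"
        using B_c3[OF F dU n1] by simp
    qed
  qed
qed

lemma case4:
  fixes n :: nat
  assumes n1: "1 \<le> n" and d: "(2 * n - 1) dvd CARD('n::finite)"
  shows "maximal_elems (TFF (1 + 2 / (2 * real n - 1)) TYPE('n))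
           = {replicate (n - 1) (2 * CARD('n) div (2 * n - 1)) @ replicate 3 (CARD('n) div (2 * n - 1))}"
proof (cases "n = 1")
  case True
  have a: "1 + 2 / (2 * real n - 1) = real (3::nat)" using True by simp
  have l: "replicate (n - 1) (2 * CARD('n) div (2 * n - 1)) @ replicate 3 (CARD('n) div (2 * n - 1)) = replicate 3 CARD('n)"
    using True by simp
  show ?thesis unfolding a l by (rule case1)
next
  case False
  then have n2: "n \<ge> 2" using n1 by simp
  obtain m where m: "CARD('n) = (2 * n - 1) * m" using d by blast
  have m1: "m \<ge> 1" using m by (metis One_nat_def less_one mult_is_0 not_le zero_less_card_finite less_irrefl)
  have pos: "2 * n - 1 > 0" using n1 by simp
  have d1: "2 * CARD('n) div (2 * n - 1) = 2 * m" using m pos by simp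
  have d2: "CARD('n) div (2 * n - 1) = m" using m pos by simp
  have rn: "real (2 * n - 1) = 2 * real n - 1" using n1 by (simp add: of_nat_diff)
  have cN: "real CARD('n) = (2 * real n - 1) * real m" by (simp only: m of_nat_mult rn)
  have rn1: "real (n - 1) = real n - 1" using n1 by (simp add: of_nat_diff)
  have a1: "1 + 2 / (2 * real n - 1) > 1" using n2 by simp
  let ?a = "1 + 2 / (2 * real n - 1)"
  show ?thesis unfolding d1 d2
  proof (rule unique_max)
    let ?L0 = "replicate (n - 1) (2 * m) @ replicate 3 m"
    have len: "length ?L0 = n + 2" using n1 by simp
    obtain F :: "nat \<Rightarrow> real^'n \<Rightarrow> real^'n" where F: "famI UNIV ?a {..<n+2} F"
        "\<forall>j<n+2. rk (F j) = ?L0 ! j"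
      using ex_c4[OF n2 m1 m] by blast
    have r: "\<forall>i<length ?L0. rk (F i) = ?L0 ! i" using F(2) len by simp
    have fl: "famI UNIV ?a {..<length ?L0} F" using F(1) len by simp
    have p: "\<forall>x\<in>set ?L0. 0 < x" using m1 by simp
    have so: "sorted_wrt (\<ge>) ?L0" by (rule sorted_rep3) simp
    show "?L0 \<in> TFF ?a TYPE('n)" by (rule TFF_intro[OF so p fl r])
    fix L assume L: "L \<in> TFF ?a TYPE('n)"
    then show "\<forall>x\<in>set L. 0 < x" by (rule TFF_pos)
    then have posL: "\<forall>x\<in>set L. 0 < x" .
    show "majorized L ?L0"
    proof (rule maj_lemma[OF L])
      have s0: "sum_list ?L0 = (n - 1) * (2 * m) + 3 * m" by (simp add: sum_list_replicate)
      have "real (sum_list ?L0) = real (n - 1) * (2 * real m) + 3 * real m"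
        unfolding s0 by (simp only: of_nat_add of_nat_mult of_nat_numeral)
      also have "\<dots> = ?a * ((2 * real n - 1) * real m)" unfolding rn1 using n2 by (simp add: field_simps)
      finally show "real (sum_list ?L0) = ?a * real CARD('n)" unfolding cN .
      fix F :: "nat \<Rightarrow> real^'n \<Rightarrow> real^'n" assume F: "famI UNIV ?a {..<length L} F"
        and FL: "\<forall>i<length L. rk (F i) = L ! i"
      have "real (length L) = (\<Sum>j<length L. 1)" by simp
      also have "\<dots> \<le> (\<Sum>j<length L. real (rk (F j)))"
      proof (rule sum_mono)
        fix j assume "j \<in> {..<length L}"
        then have "0 < L ! j" using posL by simp
        then show "1 \<le> real (rk (F j))" using FL \<open>j \<in> {..<length L}\<close> by simp
      qed
      also have "\<dots> = ?a * real CARD('n)" using fam_trace[OF F] by simp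
      also have "\<dots> = (2 * real n + 1) * real m" unfolding cN using n2 by (simp add: field_simps)
      also have "\<dots> \<le> 2 * ((2 * real n - 1) * real m)" using n2 m1 by (simp add: algebra_simps)
      also have "\<dots> = real (CARD('n \<times> bool))" using cN by simp
      finally have K: "length L \<le> CARD('n \<times> bool)" by (simp only: of_nat_le_iff)
      have le2: "2 * m \<le> CARD('n)"
      proof -
        have "2 \<le> 2 * n - 1" using n2 by simp
        then show ?thesis using m by (simp add: mult_le_mono1)
      qed
      obtain W :: "(real^'n) set" where W: "subspace W" "dim W = 2 * m" using ex_sub[OF le2] by blast
      have dd: "real (dim W) = (?a - 1) * real (dim (UNIV :: (real^'n) set))"
      proof -
        have "real (dim (UNIV :: (real^'n) set)) = (2 * real n - 1) * real m" using cN by simp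
        then show ?thesis using W(2) n2 by (simp add: field_simps)
      qed
      obtain G :: "nat \<Rightarrow> real^'n \<Rightarrow> real^'n" where G: "famI W (?a / (?a - 1)) {..<length L} G"
          "\<forall>j<length L. rk (G j) = rk (F j)"
        using functor_nat[where 'k = "'n \<times> bool", OF F a1 K W(1) dd] by blast
      have aa: "?a / (?a - 1) = real n + 1/2" using n2 by (simp add: field_simps)
      have G': "famI W (real n + 1/2) {..<length L} G" using G(1) unfolding aa .
      show "\<forall>k\<le>min (length L) (length ?L0). (\<Sum>j<k. rk (F j)) \<le> sum_list (take k ?L0)"
      proof (intro allI impI)
        fix k assume k: "k \<le> min (length L) (length ?L0)"
        have "(\<Sum>j<k. rk (F j)) = (\<Sum>j<k. rk (G j))" by (rule sum.cong) (use G(2) k in auto)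
        also have "\<dots> \<le> sum_list (take k ?L0)" by (rule B_c3[OF G' W(2) n1]) (use k in simp)
        finally show "(\<Sum>j<k. rk (F j)) \<le> sum_list (take k ?L0)" .
      qed
    qed
  qed
qed


theorem theorem3p4:
  fixes n :: nat
  defines "N \<equiv> CARD('n::finite)"
  shows "maximal_elems (TFF (real n) TYPE('n)) = {replicate n N}
    \<and> (n dvd N \<longrightarrow>
         maximal_elems (TFF (1 + 1 / real n) TYPE('n)) = {replicate (n + 1) (N div n)})
    \<and> (1 \<le> n \<and> 2 dvd N \<longrightarrow>
         maximal_elems (TFF (real n + 1 / 2) TYPE('n))
           = {replicate (n - 1) N @ replicate 3 (N div 2)})
    \<and> (1 \<le> n \<and> (2 * n - 1) dvd N \<longrightarrow>
         maximal_elems (TFF (1 + 2 / (2 * real n - 1)) TYPE('n))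
           = {replicate (n - 1) (2 * N div (2 * n - 1)) @ replicate 3 (N div (2 * n - 1))})"
  unfolding N_def
proof (intro conjI impI)
  show "maximal_elems (TFF (real n) TYPE('n)) = {replicate n CARD('n)}" by (rule case1)
  show "maximal_elems (TFF (1 + 1 / real n) TYPE('n)) = {replicate (n + 1) (CARD('n) div n)}"
    if "n dvd CARD('n)" using that by (rule case2)
  show "maximal_elems (TFF (real n + 1 / 2) TYPE('n)) = {replicate (n - 1) CARD('n) @ replicate 3 (CARD('n) div 2)}"
    if "1 \<le> n \<and> 2 dvd CARD('n)" using that case3 by blast
  show "maximal_elems (TFF (1 + 2 / (2 * real n - 1)) TYPE('n))
           = {replicate (n - 1) (2 * CARD('n) div (2 * n - 1)) @ replicate 3 (CARD('n) div (2 * n - 1))}"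
    if "1 \<le> n \<and> (2 * n - 1) dvd CARD('n)" using that case4 by blast
qed

end
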